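(* Let $q\in\mathbb C\setminus\{0\}$ not be a root of unity, $A=\mathbb C_q[SL(2)]$ with the canonical braiding $\Psi$ and the ribbon automorphism $\sigma=\sigma_+$. Then $HH^{\Psi,\sigma}_0(A)=0$; equivalently, the map $b_1:A\otimes A\to A$, $b_1=\mu-\mu(\sigma\otimes\mathrm{id})\Psi$, is surjective.
   Context: Fix $q^{1/2}$. $\mathbb C_q[SL(2)]$: generators $a,b,c,d$, relations $ab=qba$, $ac=qca$, $bd=qdb$, $cd=qdc$, $bc=cb$, $ad-qbc=1$, $da-q^{-1}bc=1$, matrix coproduct $\Delta\begin{pmatrix}a&b\\c&d\end{pmatrix}=\begin{pmatrix}a&b\\c&d\end{pmatrix}\otimes\begin{pmatrix}a&b\\c&d\end{pmatrix}$. Universal r-form $\mathbf r$ determined multiplicatively by $\mathbf r(a,a)=\mathbf r(d,d)=q^{1/2}$, $\mathbf r(a,d)=\mathbf r(d,a)=q^{-1/2}$, $\mathbf r(c,b)=q^{-1/2}(q-q^{-1})$, other generator values $0$. Canonical braiding: $\Psi(f\otimes g)=g_{(1)}\otimes f_{(1)}\mathbf r(f_{(2)},g_{(2)})$. $\sigma_+$ is the ribbon automorphism (invertible right comodule map with $\sigma(1)=1$, $\sigma\mu=\mu(\sigma\otimes\sigma)\Psi^2$) with $\sigma_+(g)=q^{3/2}g$ for $g\in\{a,b,c,d\}$. $HH^{\Psi,\sigma}_0(A)$ is the cokernel of $b_1$ (the degree-zero braided Hochschild homology; $A$ is unital so the cyclic and non-cyclic versions agree in degree 0). *)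

theory Defs
  imports Complex_Main "HOL-Library.Function_Algebras"
begin

text \<open>Generators t11 = a, t12 = b, t21 = c, t22 = d; matrix indices 1,2 are
  encoded as False, True.\<close>

datatype gen = Ga | Gb | Gc | Gd

type_synonym word = "gen list"
type_synonym fa = "word \<Rightarrow> complex"           \<comment> \<open>elements of the free algebra (finite support)\<close>
type_synonym tn = "word \<times> word \<Rightarrow> complex"   \<comment> \<open>elements of F \<otimes> F (finite support)\<close>

fun row :: "gen \<Rightarrow> bool" where
  "row Ga = False" | "row Gb = False" | "row Gc = True" | "row Gd = True"

fun col :: "gen \<Rightarrow> bool" where
  "col Ga = False" | "col Gb = True" | "col Gc = False" | "col Gd = True"

fun ent :: "bool \<Rightarrow> bool \<Rightarrow> gen" where
  "ent False False = Ga" | "ent False True = Gb" | "ent True False = Gc" | "ent True True = Gd"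

definition fin :: "('i \<Rightarrow> complex) \<Rightarrow> bool" where
  "fin f \<longleftrightarrow> finite {i. f i \<noteq> 0}"

definition FA :: "fa set" where
  "FA = {f. fin f}"

definition mon :: "word \<Rightarrow> fa" where
  "mon w = (\<lambda>v. if v = w then 1 else 0)"

definition one_fa :: fa where
  "one_fa = mon []"

definition smul :: "complex \<Rightarrow> ('i \<Rightarrow> complex) \<Rightarrow> ('i \<Rightarrow> complex)" where
  "smul c f = (\<lambda>i. c * f i)"

definition fmul :: "fa \<Rightarrow> fa \<Rightarrow> fa" where
  "fmul f g = (\<lambda>w. \<Sum>i\<le>length w. f (take i w) * g (drop i w))"

definition lsum :: "('i \<Rightarrow> complex) \<Rightarrow> ('i \<Rightarrow> 'j \<Rightarrow> complex) \<Rightarrow> ('j \<Rightarrow> complex)" where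
  "lsum c F = (\<lambda>j. \<Sum>i\<in>{i. c i \<noteq> 0}. c i * F i j)"

definition tens :: "fa \<Rightarrow> fa \<Rightarrow> tn" where
  "tens f g = (\<lambda>(u, v). f u * g v)"

definition KS :: "nat \<Rightarrow> bool list set" where
  "KS n = {ks. length ks = n}"

text \<open>For a word \<open>w = t_{i1 j1}\<dots>t_{in jn}\<close> and intermediate indices ks,
  \<open>\<Delta> w = \<Sum>_ks t_{i1 k1}\<dots>t_{in kn} \<otimes> t_{k1 j1}\<dots>t_{kn jn}\<close>.\<close>
definition lw :: "word \<Rightarrow> bool list \<Rightarrow> word" where
  "lw w ks = map2 (\<lambda>x k. ent (row x) k) w ks"

definition rtw :: "word \<Rightarrow> bool list \<Rightarrow> word" where
  "rtw w ks = map2 (\<lambda>x k. ent k (col x)) w ks"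

definition delta_w :: "word \<Rightarrow> tn" where
  "delta_w w = (\<lambda>p. \<Sum>ks\<in>KS (length w). if p = (lw w ks, rtw w ks) then 1 else 0)"

definition Delta :: "fa \<Rightarrow> tn" where
  "Delta f = lsum f delta_w"

definition eps_w :: "word \<Rightarrow> complex" where
  "eps_w w = prod_list (map (\<lambda>x. if row x = col x then 1 else 0) w)"

section \<open>The universal r-form (s = q^(1/2))\<close>

fun r1 :: "complex \<Rightarrow> gen \<Rightarrow> gen \<Rightarrow> complex" where
  "r1 s Ga Ga = s"
| "r1 s Gd Gd = s"
| "r1 s Ga Gd = 1 / s"
| "r1 s Gd Ga = 1 / s"
| "r1 s Gc Gb = (1 / s) * (s\<^sup>2 - 1 / s\<^sup>2)"
| "r1 s _ _ = 0"

text \<open>\<open>r(x, g h) = r(x_(1), h) r(x_(2), g)\<close>, \<open>r(x, 1) = \<epsilon>(x)\<close>.\<close>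
fun rgw :: "complex \<Rightarrow> gen \<Rightarrow> word \<Rightarrow> complex" where
  "rgw s x [] = (if row x = col x then 1 else 0)"
| "rgw s x [y] = r1 s x y"
| "rgw s x (y # z # v) = (\<Sum>k\<in>UNIV. rgw s (ent (row x) k) (z # v) * r1 s (ent k (col x)) y)"

text \<open>\<open>r(f g, h) = r(f, h_(1)) r(g, h_(2))\<close>, \<open>r(1, h) = \<epsilon>(h)\<close>.\<close>
fun rform_w :: "complex \<Rightarrow> word \<Rightarrow> word \<Rightarrow> complex" where
  "rform_w s [] w = eps_w w"
| "rform_w s (x # u) w = (\<Sum>ks\<in>KS (length w). rgw s x (lw w ks) * rform_w s u (rtw w ks))"

text \<open>\<open>\<Psi>(u \<otimes> v) = v_(1) \<otimes> u_(1) r(u_(2), v_(2))\<close>\<close>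
definition psi_w :: "complex \<Rightarrow> word \<Rightarrow> word \<Rightarrow> tn" where
  "psi_w s u v = (\<lambda>p. \<Sum>ks\<in>KS (length u). \<Sum>ls\<in>KS (length v).
      if p = (lw v ls, lw u ks) then rform_w s (rtw u ks) (rtw v ls) else 0)"

definition Psi :: "complex \<Rightarrow> tn \<Rightarrow> tn" where
  "Psi s T = lsum T (\<lambda>(u, v). psi_w s u v)"

definition mu_ss :: "(fa \<Rightarrow> fa) \<Rightarrow> tn \<Rightarrow> fa" where
  "mu_ss \<sigma> T = lsum T (\<lambda>(u, v). fmul (\<sigma> (mon u)) (\<sigma> (mon v)))"

definition mu_s1 :: "(fa \<Rightarrow> fa) \<Rightarrow> tn \<Rightarrow> fa" where
  "mu_s1 \<sigma> T = lsum T (\<lambda>(u, v). fmul (\<sigma> (mon u)) (mon v))"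

definition sig_tens :: "(fa \<Rightarrow> fa) \<Rightarrow> tn \<Rightarrow> tn" where
  "sig_tens \<sigma> T = lsum T (\<lambda>(u, v). tens (\<sigma> (mon u)) (mon v))"

section \<open>C_q[SL(2)] as the quotient of the free algebra by the ideal Iq\<close>

definition rels :: "complex \<Rightarrow> fa set" where
  "rels s = (let q = s\<^sup>2 in
    { mon [Ga, Gb] - smul q (mon [Gb, Ga]),
      mon [Ga, Gc] - smul q (mon [Gc, Ga]),
      mon [Gb, Gd] - smul q (mon [Gd, Gb]),
      mon [Gc, Gd] - smul q (mon [Gd, Gc]),
      mon [Gb, Gc] - mon [Gc, Gb],
      mon [Ga, Gd] - smul q (mon [Gb, Gc]) - one_fa,
      mon [Gd, Ga] - smul (1 / q) (mon [Gb, Gc]) - one_fa })"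

inductive_set Iq :: "complex \<Rightarrow> fa set" for s :: complex where
  Iq_zero: "0 \<in> Iq s"
| Iq_add: "x \<in> Iq s \<Longrightarrow> y \<in> Iq s \<Longrightarrow> x + y \<in> Iq s"
| Iq_smul: "x \<in> Iq s \<Longrightarrow> smul c x \<in> Iq s"
| Iq_gen: "r \<in> rels s \<Longrightarrow> fmul (mon u) (fmul r (mon v)) \<in> Iq s"

text \<open>Kernel of F\<otimes>F \<rightarrow> A\<otimes>A: span of I\<otimes>F + F\<otimes>I.\<close>
inductive_set Jq :: "complex \<Rightarrow> tn set" for s :: complex where
  Jq_zero: "0 \<in> Jq s"
| Jq_add: "x \<in> Jq s \<Longrightarrow> y \<in> Jq s \<Longrightarrow> x + y \<in> Jq s"
| Jq_smul: "x \<in> Jq s \<Longrightarrow> smul c x \<in> Jq s"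
| Jq_left: "i \<in> Iq s \<Longrightarrow> tens i (mon v) \<in> Jq s"
| Jq_right: "i \<in> Iq s \<Longrightarrow> tens (mon u) i \<in> Jq s"

section \<open>The ribbon automorphism sigma_+ (as a map on representatives, modulo Iq)\<close>

definition is_ribbon_plus :: "complex \<Rightarrow> (fa \<Rightarrow> fa) \<Rightarrow> bool" where
  "is_ribbon_plus s \<sigma> \<longleftrightarrow>
     (\<forall>f\<in>FA. \<sigma> f \<in> FA)
   \<and> (\<forall>f\<in>FA. \<forall>g\<in>FA. f - g \<in> Iq s \<longrightarrow> \<sigma> f - \<sigma> g \<in> Iq s)
   \<and> (\<forall>f\<in>FA. \<forall>g\<in>FA. \<sigma> (f + g) - (\<sigma> f + \<sigma> g) \<in> Iq s)
   \<and> (\<forall>c. \<forall>f\<in>FA. \<sigma> (smul c f) - smul c (\<sigma> f) \<in> Iq s)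
   \<and> (\<sigma> one_fa - one_fa \<in> Iq s)
   \<and> (\<forall>x. \<sigma> (mon [x]) - smul (s ^ 3) (mon [x]) \<in> Iq s)
   \<and> (\<forall>f\<in>FA. \<forall>g\<in>FA. \<sigma> (fmul f g) - mu_ss \<sigma> (Psi s (Psi s (tens f g))) \<in> Iq s)
   \<and> (\<forall>f\<in>FA. Delta (\<sigma> f) - sig_tens \<sigma> (Delta f) \<in> Jq s)
   \<and> (\<exists>\<tau>. (\<forall>f\<in>FA. \<tau> f \<in> FA)
        \<and> (\<forall>f\<in>FA. \<forall>g\<in>FA. f - g \<in> Iq s \<longrightarrow> \<tau> f - \<tau> g \<in> Iq s)
        \<and> (\<forall>f\<in>FA. \<sigma> (\<tau> f) - f \<in> Iq s \<and> \<tau> (\<sigma> f) - f \<in> Iq s))"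

definition b1 :: "complex \<Rightarrow> (fa \<Rightarrow> fa) \<Rightarrow> fa \<Rightarrow> fa \<Rightarrow> fa" where
  "b1 s \<sigma> f g = fmul f g - mu_s1 \<sigma> (Psi s (tens f g))"

end

theory Submission
  imports Defs
begin

lemma sum_fun_apply: "(sum f A) x = sum (\<lambda>a. f a x) A"
  by (induction A rule: infinite_finite_induct) auto

lemma fmul_mon_left: "fmul (mon u) g = (\<lambda>w. if take (length u) w = u then g (drop (length u) w) else 0)"
proof
  fix w
  have "fmul (mon u) g w = (\<Sum>i\<le>length w. if i = length u then (if take i w = u then g (drop i w) else 0) else 0)"
    unfolding fmul_def by (rule sum.cong) (auto simp: mon_def)
  also have "\<dots> = (if take (length u) w = u then g (drop (length u) w) else 0)"
    by (auto simp: sum.delta dest: arg_cong[of _ _ length])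
  finally show "fmul (mon u) g w = (if take (length u) w = u then g (drop (length u) w) else 0)" .
qed

lemma fmul_mon_right: "fmul f (mon v) = (\<lambda>w. if drop (length w - length v) w = v then f (take (length w - length v) w) else 0)"
proof
  fix w
  have "fmul f (mon v) w = (\<Sum>i\<le>length w. if i = length w - length v then (if drop i w = v then f (take i w) else 0) else 0)"
    unfolding fmul_def by (rule sum.cong) (auto simp: mon_def)
  also have "\<dots> = (if drop (length w - length v) w = v then f (take (length w - length v) w) else 0)"
    by (auto simp: sum.delta)
  finally show "fmul f (mon v) w = (if drop (length w - length v) w = v then f (take (length w - length v) w) else 0)" .
qed

lemma mon_mul: "fmul (mon u) (mon v) = mon (u @ v)"
  unfolding fmul_mon_left
  by (auto simp: mon_def fun_eq_iff) (metis append_take_drop_id)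


lemma take_eq_prefix: "take (length u) w = u \<longleftrightarrow> (\<exists>w'. w = u @ w')"
  by (metis append_eq_conv_conj append_take_drop_id)

lemma fmul_mon_left': "fmul (mon u) g w = (if \<exists>w'. w = u @ w' then g (drop (length u) w) else 0)"
  unfolding fmul_mon_left take_eq_prefix by simp

lemma fmul_mon_left_assoc: "fmul (mon u') (fmul (mon u) g) = fmul (mon (u' @ u)) g"
proof
  fix w
  show "fmul (mon u') (fmul (mon u) g) w = fmul (mon (u' @ u)) g w"
  proof (cases "\<exists>v. w = u' @ u @ v")
    case True
    then obtain v where "w = u' @ u @ v" by blast
    then show ?thesis by (simp add: fmul_mon_left')
  next
    case False
    then show ?thesis by (auto simp add: fmul_mon_left')
  qed
qed


lemma drop_eq_suffix: "drop (length w - length v) w = v \<longleftrightarrow> (\<exists>w'. w = w' @ v)"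
proof
  assume "drop (length w - length v) w = v"
  then show "\<exists>w'. w = w' @ v" by (metis append_take_drop_id)
next
  assume "\<exists>w'. w = w' @ v"
  then obtain w' where "w = w' @ v" by blast
  then show "drop (length w - length v) w = v" by simp
qed

lemma fmul_mon_right': "fmul f (mon v) w = (if \<exists>w'. w = w' @ v then f (take (length w - length v) w) else 0)"
  unfolding fmul_mon_right drop_eq_suffix by simp

lemma fmul_add_left: "fmul (f + g) h = fmul f h + fmul g h"
  by (simp add: fmul_def fun_eq_iff sum.distrib algebra_simps)
lemma fmul_add_right: "fmul h (f + g) = fmul h f + fmul h g"
  by (simp add: fmul_def fun_eq_iff sum.distrib algebra_simps)
lemma fmul_diff_left: "fmul (f - g) h = fmul f h - fmul g h"
  by (simp add: fmul_def fun_eq_iff sum_subtractf algebra_simps)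
lemma fmul_diff_right: "fmul h (f - g) = fmul h f - fmul h g"
  by (simp add: fmul_def fun_eq_iff sum_subtractf algebra_simps)
lemma fmul_smul_left: "fmul (smul c f) h = smul c (fmul f h)"
  by (simp add: fmul_def fun_eq_iff smul_def sum_distrib_left algebra_simps)
lemma fmul_smul_right: "fmul h (smul c f) = smul c (fmul h f)"
  by (simp add: fmul_def fun_eq_iff smul_def sum_distrib_left algebra_simps)
lemma fmul_zero_left: "fmul 0 h = 0"
  by (simp add: fmul_def fun_eq_iff)
lemma fmul_zero_right: "fmul h 0 = 0"
  by (simp add: fmul_def fun_eq_iff)

lemma fmul_mon_right_assoc: "fmul (fmul f (mon v)) (mon v') = fmul f (mon (v @ v'))"
proof
  fix w
  show "fmul (fmul f (mon v)) (mon v') w = fmul f (mon (v @ v')) w"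
  proof (cases "\<exists>x. w = x @ v @ v'")
    case True
    then obtain x where "w = x @ v @ v'" by blast
    then show ?thesis by (simp add: fmul_mon_right')
  next
    case False
    then show ?thesis by (auto simp add: fmul_mon_right')
  qed
qed

lemma fmul_mon_mid_assoc: "fmul (fmul (mon u) g) (mon v) = fmul (mon u) (fmul g (mon v))"
proof
  fix w
  show "fmul (fmul (mon u) g) (mon v) w = fmul (mon u) (fmul g (mon v)) w"
  proof (cases "\<exists>x. w = u @ x @ v")
    case True
    then obtain x where "w = u @ x @ v" by blast
    then show ?thesis by (simp add: fmul_mon_right' fmul_mon_left')
  next
    case False
    have L: "fmul (fmul (mon u) g) (mon v) w = 0"
    proof (cases "\<exists>x. w = x @ v")
      case True
      then obtain x where x: "w = x @ v" by blast
      have "\<not> (\<exists>y. x = u @ y)" using False x by auto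
      then show ?thesis using x by (simp add: fmul_mon_right' fmul_mon_left')
    qed (simp add: fmul_mon_right')
    have R: "fmul (mon u) (fmul g (mon v)) w = 0"
    proof (cases "\<exists>z. w = u @ z")
      case True
      then obtain z where z: "w = u @ z" by blast
      have "\<not> (\<exists>y. z = y @ v)" using False z by auto
      then show ?thesis using z by (simp add: fmul_mon_right' fmul_mon_left')
    qed (simp add: fmul_mon_left')
    show ?thesis using L R by simp
  qed
qed

lemma smul_add: "smul c (f + g) = smul c f + smul c g"
  by (simp add: smul_def fun_eq_iff algebra_simps)
lemma smul_diff: "smul c (f - g) = smul c f - smul c g"
  by (simp add: smul_def fun_eq_iff algebra_simps)
lemma smul_smul: "smul c (smul d f) = smul (c * d) f"
  by (simp add: smul_def fun_eq_iff)
lemma smul_one: "smul 1 f = f"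
  by (simp add: smul_def fun_eq_iff)
lemma smul_zero: "smul c 0 = 0"
  by (simp add: smul_def fun_eq_iff)
lemma smul_zero': "smul 0 f = 0"
  by (simp add: smul_def fun_eq_iff)

lemma smul_neg1: "smul (-1) x = - x"
  by (simp add: smul_def fun_eq_iff)
lemma Iq_neg: "x \<in> Iq s \<Longrightarrow> - x \<in> Iq s"
  using Iq_smul[of x s "-1"] by (simp only: smul_neg1)
lemma Iq_diff: "x \<in> Iq s \<Longrightarrow> y \<in> Iq s \<Longrightarrow> x - y \<in> Iq s"
  using Iq_add[OF _ Iq_neg] by (metis diff_conv_add_uminus)

lemma Iq_lm: "x \<in> Iq s \<Longrightarrow> fmul (mon u) x \<in> Iq s"
proof (induction x rule: Iq.induct)
  case Iq_zero then show ?case using Iq.Iq_zero[of s] by (simp add: fmul_def zero_fun_def)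
next
  case (Iq_add x y) then show ?case by (metis fmul_add_right Iq.Iq_add)
next
  case (Iq_smul x c) then show ?case by (simp add: fmul_smul_right Iq.Iq_smul)
next
  case (Iq_gen r u' v) then show ?case by (simp add: fmul_mon_left_assoc Iq.Iq_gen)
qed

lemma Iq_rm: "x \<in> Iq s \<Longrightarrow> fmul x (mon v) \<in> Iq s"
proof (induction x rule: Iq.induct)
  case Iq_zero then show ?case using Iq.Iq_zero[of s] by (simp add: fmul_def zero_fun_def)
next
  case (Iq_add x y) then show ?case by (metis fmul_add_left Iq.Iq_add)
next
  case (Iq_smul x c) then show ?case by (simp add: fmul_smul_left Iq.Iq_smul)
next
  case (Iq_gen r u' v') then show ?case by (simp add: fmul_mon_mid_assoc fmul_mon_right_assoc Iq.Iq_gen)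
qed

lemma Iq_sum: "finite K \<Longrightarrow> (\<And>k. k \<in> K \<Longrightarrow> f k \<in> Iq s) \<Longrightarrow> sum f K \<in> Iq s"
  by (induction K rule: finite_induct) (auto intro: Iq.intros)

definition eqv :: "complex \<Rightarrow> fa \<Rightarrow> fa \<Rightarrow> bool" where
  "eqv s f g \<longleftrightarrow> f - g \<in> Iq s"

lemma eqv_refl: "eqv s f f" by (simp add: eqv_def Iq.Iq_zero)
lemma eqv_sym: "eqv s f g \<Longrightarrow> eqv s g f"
  unfolding eqv_def using Iq_neg by (metis minus_diff_eq)
lemma eqv_trans: "eqv s f g \<Longrightarrow> eqv s g h \<Longrightarrow> eqv s f h"
proof -
  have "f - h = (f - g) + (g - h)" by simp
  then show "eqv s f g \<Longrightarrow> eqv s g h \<Longrightarrow> eqv s f h" unfolding eqv_def using Iq_add by metis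
qed
lemma eqv_add: "eqv s f g \<Longrightarrow> eqv s f' g' \<Longrightarrow> eqv s (f + f') (g + g')"
proof -
  have "f + f' - (g + g') = (f - g) + (f' - g')" by (simp add: algebra_simps)
  then show "eqv s f g \<Longrightarrow> eqv s f' g' \<Longrightarrow> eqv s (f + f') (g + g')"
    unfolding eqv_def using Iq_add by metis
qed
lemma eqv_diff: "eqv s f g \<Longrightarrow> eqv s f' g' \<Longrightarrow> eqv s (f - f') (g - g')"
proof -
  have "f - f' - (g - g') = (f - g) - (f' - g')" by (simp add: algebra_simps)
  then show "eqv s f g \<Longrightarrow> eqv s f' g' \<Longrightarrow> eqv s (f - f') (g - g')"
    unfolding eqv_def using Iq_diff by metis
qed
lemma eqv_smul: "eqv s f g \<Longrightarrow> eqv s (smul c f) (smul c g)"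
  unfolding eqv_def using Iq.Iq_smul by (metis smul_diff)
lemma eqv_lm: "eqv s f g \<Longrightarrow> eqv s (fmul (mon u) f) (fmul (mon u) g)"
  unfolding eqv_def using Iq_lm by (metis fmul_diff_right)
lemma eqv_rm: "eqv s f g \<Longrightarrow> eqv s (fmul f (mon v)) (fmul g (mon v))"
  unfolding eqv_def using Iq_rm by (metis fmul_diff_left)


lemma sandwich_mon: "fmul (mon u) (fmul (mon w) (mon v)) = mon (u @ w @ v)"
  by (simp add: mon_mul)

lemma rel_swap:
  assumes "mon [x, y] - smul c (mon [y, x]) \<in> rels s"
  shows "eqv s (mon (u @ [x, y] @ v)) (smul c (mon (u @ [y, x] @ v)))"
proof -
  have "fmul (mon u) (fmul (mon [x, y] - smul c (mon [y, x])) (mon v)) \<in> Iq s"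
    using assms by (rule Iq_gen)
  also have "fmul (mon u) (fmul (mon [x, y] - smul c (mon [y, x])) (mon v))
     = mon (u @ [x, y] @ v) - smul c (mon (u @ [y, x] @ v))"
    by (simp add: fmul_diff_left fmul_diff_right fmul_smul_left fmul_smul_right mon_mul)
  finally show ?thesis unfolding eqv_def .
qed

lemma sw_ab: "eqv s (mon (u @ [Ga, Gb] @ v)) (smul (s\<^sup>2) (mon (u @ [Gb, Ga] @ v)))"
  by (rule rel_swap) (simp add: rels_def Let_def)
lemma sw_ac: "eqv s (mon (u @ [Ga, Gc] @ v)) (smul (s\<^sup>2) (mon (u @ [Gc, Ga] @ v)))"
  by (rule rel_swap) (simp add: rels_def Let_def)
lemma sw_bd: "eqv s (mon (u @ [Gb, Gd] @ v)) (smul (s\<^sup>2) (mon (u @ [Gd, Gb] @ v)))"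
  by (rule rel_swap) (simp add: rels_def Let_def)
lemma sw_cd: "eqv s (mon (u @ [Gc, Gd] @ v)) (smul (s\<^sup>2) (mon (u @ [Gd, Gc] @ v)))"
  by (rule rel_swap) (simp add: rels_def Let_def)
lemma sw_bc: "eqv s (mon (u @ [Gb, Gc] @ v)) (smul 1 (mon (u @ [Gc, Gb] @ v)))"
  by (rule rel_swap) (simp add: rels_def Let_def smul_one)

lemma sw_inv:
  assumes "\<And>u v. eqv s (mon (u @ [x, y] @ v)) (smul c (mon (u @ [y, x] @ v)))" and "c \<noteq> 0"
  shows "eqv s (mon (u @ [y, x] @ v)) (smul (1 / c) (mon (u @ [x, y] @ v)))"
proof -
  have "eqv s (smul (1/c) (mon (u @ [x, y] @ v))) (smul (1/c) (smul c (mon (u @ [y, x] @ v))))"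
    by (rule eqv_smul) (rule assms(1))
  then show ?thesis using assms(2) by (simp add: smul_smul smul_one eqv_sym)
qed

lemma rel_ad: "eqv s (mon (u @ [Ga, Gd] @ v)) (smul (s\<^sup>2) (mon (u @ [Gb, Gc] @ v)) + mon (u @ v))"
proof -
  have "fmul (mon u) (fmul (mon [Ga, Gd] - smul (s\<^sup>2) (mon [Gb, Gc]) - one_fa) (mon v)) \<in> Iq s"
    by (rule Iq_gen) (simp add: rels_def Let_def)
  also have "fmul (mon u) (fmul (mon [Ga, Gd] - smul (s\<^sup>2) (mon [Gb, Gc]) - one_fa) (mon v))
     = mon (u @ [Ga, Gd] @ v) - (smul (s\<^sup>2) (mon (u @ [Gb, Gc] @ v)) + mon (u @ v))"
    by (simp add: fmul_diff_left fmul_diff_right fmul_smul_left fmul_smul_right mon_mul one_fa_def)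
  finally show ?thesis unfolding eqv_def .
qed

lemma rel_da: "eqv s (mon (u @ [Gd, Ga] @ v)) (smul (1 / s\<^sup>2) (mon (u @ [Gb, Gc] @ v)) + mon (u @ v))"
proof -
  have "fmul (mon u) (fmul (mon [Gd, Ga] - smul (1 / s\<^sup>2) (mon [Gb, Gc]) - one_fa) (mon v)) \<in> Iq s"
    by (rule Iq_gen) (simp add: rels_def Let_def)
  also have "fmul (mon u) (fmul (mon [Gd, Ga] - smul (1 / s\<^sup>2) (mon [Gb, Gc]) - one_fa) (mon v))
     = mon (u @ [Gd, Ga] @ v) - (smul (1 / s\<^sup>2) (mon (u @ [Gb, Gc] @ v)) + mon (u @ v))"
    by (simp add: fmul_diff_left fmul_diff_right fmul_smul_left fmul_smul_right mon_mul one_fa_def)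
  finally show ?thesis unfolding eqv_def .
qed

lemma move1:
  assumes sw: "\<And>u v. eqv s (mon (u @ [x, y] @ v)) (smul c (mon (u @ [y, x] @ v)))"
  shows "eqv s (mon (u @ replicate n x @ [y] @ v)) (smul (c ^ n) (mon (u @ [y] @ replicate n x @ v)))"
proof (induction n arbitrary: u)
  case 0
  then show ?case by (simp add: smul_one eqv_refl)
next
  case (Suc n)
  have 1: "eqv s (mon (u @ replicate (Suc n) x @ [y] @ v)) (smul (c ^ n) (mon ((u @ [x]) @ [y] @ replicate n x @ v)))"
    using Suc[of "u @ [x]"] by simp
  have 2: "eqv s (mon (u @ [x, y] @ (replicate n x @ v))) (smul c (mon (u @ [y, x] @ (replicate n x @ v))))"
    by (rule sw)
  have 3: "eqv s (smul (c ^ n) (mon ((u @ [x]) @ [y] @ replicate n x @ v))) (smul (c ^ n) (smul c (mon (u @ [y] @ replicate (Suc n) x @ v))))"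
    using eqv_smul[OF 2, of "c ^ n"] by simp
  show ?case using eqv_trans[OF 1 3] by (simp add: smul_smul mult.commute)
qed

lemma move2:
  assumes sw: "\<And>u v. eqv s (mon (u @ [x, y] @ v)) (smul c (mon (u @ [y, x] @ v)))"
  shows "eqv s (mon (u @ [x] @ replicate n y @ v)) (smul (c ^ n) (mon (u @ replicate n y @ [x] @ v)))"
proof (induction n arbitrary: u)
  case 0
  then show ?case by (simp add: smul_one eqv_refl)
next
  case (Suc n)
  have 1: "eqv s (mon (u @ [x, y] @ (replicate n y @ v))) (smul c (mon (u @ [y, x] @ (replicate n y @ v))))"
    by (rule sw)
  have 2: "eqv s (mon ((u @ [y]) @ [x] @ replicate n y @ v)) (smul (c ^ n) (mon ((u @ [y]) @ replicate n y @ [x] @ v)))"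
    by (rule Suc)
  have 3: "eqv s (smul c (mon (u @ [y, x] @ (replicate n y @ v)))) (smul c (smul (c ^ n) (mon (u @ replicate (Suc n) y @ [x] @ v))))"
    using eqv_smul[OF 2, of c] by simp
  show ?case using eqv_trans[OF 1 3] by (simp add: smul_smul)
qed


definition Pw :: "nat \<Rightarrow> nat \<Rightarrow> nat \<Rightarrow> word" where
  "Pw i j k = replicate i Ga @ replicate j Gb @ replicate k Gc"
definition Qw :: "nat \<Rightarrow> nat \<Rightarrow> nat \<Rightarrow> word" where
  "Qw i j k = replicate i Gd @ replicate j Gb @ replicate k Gc"

lemma sw_ca: "s \<noteq> 0 \<Longrightarrow> eqv s (mon (u @ [Gc, Ga] @ v)) (smul (1 / s\<^sup>2) (mon (u @ [Ga, Gc] @ v)))"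
  by (rule sw_inv[OF sw_ac]) simp
lemma sw_ba: "s \<noteq> 0 \<Longrightarrow> eqv s (mon (u @ [Gb, Ga] @ v)) (smul (1 / s\<^sup>2) (mon (u @ [Ga, Gb] @ v)))"
  by (rule sw_inv[OF sw_ab]) simp
lemma sw_dc: "s \<noteq> 0 \<Longrightarrow> eqv s (mon (u @ [Gd, Gc] @ v)) (smul (1 / s\<^sup>2) (mon (u @ [Gc, Gd] @ v)))"
  by (rule sw_inv[OF sw_cd]) simp
lemma sw_cb: "eqv s (mon (u @ [Gc, Gb] @ v)) (smul 1 (mon (u @ [Gb, Gc] @ v)))"
  using sw_inv[OF sw_bc] by simp

lemma eqv_chain: "eqv s f (smul c1 g) \<Longrightarrow> eqv s g (smul c2 h) \<Longrightarrow> eqv s f (smul (c1 * c2) h)"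
  by (metis eqv_smul eqv_trans smul_smul)

lemma eqv_chain2: "eqv s f (smul c1 g) \<Longrightarrow> eqv s g h \<Longrightarrow> eqv s f (smul c1 h)"
  by (metis eqv_smul eqv_trans)

inductive_set SP :: "complex \<Rightarrow> fa set" for s :: complex where
  SP_P: "mon (Pw i j k) \<in> SP s"
| SP_Q: "mon (Qw i j k) \<in> SP s"
| SP_add: "f \<in> SP s \<Longrightarrow> g \<in> SP s \<Longrightarrow> f + g \<in> SP s"
| SP_smul: "f \<in> SP s \<Longrightarrow> smul c f \<in> SP s"
| SP_eqv: "f \<in> SP s \<Longrightarrow> eqv s g f \<Longrightarrow> g \<in> SP s"

lemma SP_step1: "eqv s f (smul c g) \<Longrightarrow> g \<in> SP s \<Longrightarrow> f \<in> SP s"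
  by (meson SP_eqv SP_smul)
lemma SP_step2: "eqv s f (smul c g + smul d h) \<Longrightarrow> g \<in> SP s \<Longrightarrow> h \<in> SP s \<Longrightarrow> f \<in> SP s"
  by (meson SP_eqv SP_smul SP_add)

lemma rep_cons: "replicate n x @ x # xs = x # replicate n x @ xs"
  by (induction n) auto

lemma P_a: assumes "s \<noteq> 0" shows "mon (Pw i j k @ [Ga]) \<in> SP s"
proof -
  have 1: "eqv s (mon (Pw i j k @ [Ga])) (smul ((1 / s\<^sup>2) ^ k) (mon (replicate i Ga @ replicate j Gb @ [Ga] @ replicate k Gc)))"
    using move1[OF sw_ca[OF assms], where u="replicate i Ga @ replicate j Gb" and n=k and v="[]"] by (simp add: Pw_def)
  have 2: "eqv s (mon (replicate i Ga @ replicate j Gb @ [Ga] @ replicate k Gc)) (smul ((1 / s\<^sup>2) ^ j) (mon (Pw (Suc i) j k)))"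
    using move1[OF sw_ba[OF assms], where u="replicate i Ga" and n=j and v="replicate k Gc"] by (simp add: Pw_def rep_cons)
  show ?thesis using eqv_chain[OF 1 2] SP_P SP_step1 by blast
qed

lemma P_b: "mon (Pw i j k @ [Gb]) \<in> SP s"
proof -
  have 1: "eqv s (mon (Pw i j k @ [Gb])) (smul (1 ^ k) (mon (Pw i (Suc j) k)))"
    using move1[OF sw_cb, where u="replicate i Ga @ replicate j Gb" and n=k and v="[]"]
    by (simp add: Pw_def rep_cons replicate_append_same)
  show ?thesis using 1 SP_P SP_step1 by blast
qed

lemma P_c: "mon (Pw i j k @ [Gc]) \<in> SP s"
proof -
  have "Pw i j k @ [Gc] = Pw i j (Suc k)" by (simp add: Pw_def replicate_append_same)
  then show ?thesis using SP_P by metis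
qed

lemma Q_c: "mon (Qw i j k @ [Gc]) \<in> SP s"
proof -
  have "Qw i j k @ [Gc] = Qw i j (Suc k)" by (simp add: Qw_def replicate_append_same)
  then show ?thesis using SP_Q by metis
qed

lemma Q_b: "mon (Qw i j k @ [Gb]) \<in> SP s"
proof -
  have 1: "eqv s (mon (Qw i j k @ [Gb])) (smul (1 ^ k) (mon (Qw i (Suc j) k)))"
    using move1[OF sw_cb, where u="replicate i Gd @ replicate j Gb" and n=k and v="[]"]
    by (simp add: Qw_def rep_cons replicate_append_same)
  show ?thesis using 1 SP_Q SP_step1 by blast
qed

lemma Q_d: "eqv s (mon (Qw i j k @ [Gd])) (smul ((s\<^sup>2) ^ k * (s\<^sup>2) ^ j) (mon (Qw (Suc i) j k)))"
proof -
  have 1: "eqv s (mon (Qw i j k @ [Gd])) (smul ((s\<^sup>2) ^ k) (mon (replicate i Gd @ replicate j Gb @ [Gd] @ replicate k Gc)))"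
    using move1[OF sw_cd, where u="replicate i Gd @ replicate j Gb" and n=k and v="[]"] by (simp add: Qw_def)
  have 2: "eqv s (mon (replicate i Gd @ replicate j Gb @ [Gd] @ replicate k Gc)) (smul ((s\<^sup>2) ^ j) (mon (Qw (Suc i) j k)))"
    using move1[OF sw_bd, where u="replicate i Gd" and n=j and v="replicate k Gc"] by (simp add: Qw_def rep_cons)
  show ?thesis using eqv_chain[OF 1 2] .
qed

lemma Q_d': "mon (Qw i j k @ [Gd]) \<in> SP s"
  using Q_d SP_Q SP_step1 by blast

lemma P_d: assumes "s \<noteq> 0" shows "mon (Pw i j k @ [Gd]) \<in> SP s"
proof -
  have 1: "eqv s (mon (Pw i j k @ [Gd])) (smul ((s\<^sup>2) ^ k) (mon (replicate i Ga @ replicate j Gb @ [Gd] @ replicate k Gc)))"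
    using move1[OF sw_cd, where u="replicate i Ga @ replicate j Gb" and n=k and v="[]"] by (simp add: Pw_def)
  have 2: "eqv s (mon (replicate i Ga @ replicate j Gb @ [Gd] @ replicate k Gc)) (smul ((s\<^sup>2) ^ j) (mon (replicate i Ga @ [Gd] @ replicate j Gb @ replicate k Gc)))"
    using move1[OF sw_bd, where u="replicate i Ga" and n=j and v="replicate k Gc"] by simp
  have 3: "mon (replicate i Ga @ [Gd] @ replicate j Gb @ replicate k Gc) \<in> SP s"
  proof (cases i)
    case 0
    then have "replicate i Ga @ [Gd] @ replicate j Gb @ replicate k Gc = Qw 1 j k" by (simp add: Qw_def)
    then show ?thesis using SP_Q by metis
  next
    case (Suc i')
    have e: "replicate i Ga @ [Gd] @ replicate j Gb @ replicate k Gc = replicate i' Ga @ [Ga, Gd] @ (replicate j Gb @ replicate k Gc)"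
      using Suc by (simp add: rep_cons)
    have 4: "eqv s (mon ((replicate i' Ga @ [Gb]) @ [Gc] @ replicate j Gb @ replicate k Gc)) (smul (1 ^ j) (mon (Pw i' (Suc j) (Suc k))))"
      using move2[OF sw_cb, where u="replicate i' Ga @ [Gb]" and n=j and v="replicate k Gc"] by (simp add: Pw_def)
    have 5: "mon (replicate i' Ga @ [Gb, Gc] @ (replicate j Gb @ replicate k Gc)) \<in> SP s"
      using SP_step1[OF 4 SP_P] by simp
    have 6: "mon (replicate i' Ga @ (replicate j Gb @ replicate k Gc)) \<in> SP s"
      using SP_P[of i' j k s] by (simp add: Pw_def)
    show ?thesis unfolding e using SP_eqv[OF SP_add[OF SP_smul[OF 5] 6] rel_ad] .
  qed
  show ?thesis using SP_step1[OF 1 SP_step1[OF 2 3]] .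
qed

lemma Q_a: assumes "s \<noteq> 0" shows "mon (Qw i j k @ [Ga]) \<in> SP s"
proof -
  have 1: "eqv s (mon (Qw i j k @ [Ga])) (smul ((1 / s\<^sup>2) ^ k) (mon (replicate i Gd @ replicate j Gb @ [Ga] @ replicate k Gc)))"
    using move1[OF sw_ca[OF assms], where u="replicate i Gd @ replicate j Gb" and n=k and v="[]"] by (simp add: Qw_def)
  have 2: "eqv s (mon (replicate i Gd @ replicate j Gb @ [Ga] @ replicate k Gc)) (smul ((1 / s\<^sup>2) ^ j) (mon (replicate i Gd @ [Ga] @ replicate j Gb @ replicate k Gc)))"
    using move1[OF sw_ba[OF assms], where u="replicate i Gd" and n=j and v="replicate k Gc"] by simp
  have 3: "mon (replicate i Gd @ [Ga] @ replicate j Gb @ replicate k Gc) \<in> SP s"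
  proof (cases i)
    case 0
    then have "replicate i Gd @ [Ga] @ replicate j Gb @ replicate k Gc = Pw 1 j k" by (simp add: Pw_def)
    then show ?thesis using SP_P by metis
  next
    case (Suc i')
    have e: "replicate i Gd @ [Ga] @ replicate j Gb @ replicate k Gc = replicate i' Gd @ [Gd, Ga] @ (replicate j Gb @ replicate k Gc)"
      using Suc by (simp add: rep_cons)
    have 4: "eqv s (mon ((replicate i' Gd @ [Gb]) @ [Gc] @ replicate j Gb @ replicate k Gc)) (smul (1 ^ j) (mon (Qw i' (Suc j) (Suc k))))"
      using move2[OF sw_cb, where u="replicate i' Gd @ [Gb]" and n=j and v="replicate k Gc"] by (simp add: Qw_def)
    have 5: "mon (replicate i' Gd @ [Gb, Gc] @ (replicate j Gb @ replicate k Gc)) \<in> SP s"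
      using SP_step1[OF 4 SP_Q] by simp
    have 6: "mon (replicate i' Gd @ (replicate j Gb @ replicate k Gc)) \<in> SP s"
      using SP_Q[of i' j k s] by (simp add: Qw_def)
    show ?thesis unfolding e using SP_eqv[OF SP_add[OF SP_smul[OF 5] 6] rel_da] .
  qed
  show ?thesis using SP_step1[OF 1 SP_step1[OF 2 3]] .
qed

lemma SP_rm: assumes "s \<noteq> 0" and "f \<in> SP s" shows "fmul f (mon [x]) \<in> SP s"
  using assms(2)
proof (induction f rule: SP.induct)
  case (SP_P i j k)
  then show ?case using P_a[OF assms(1)] P_b P_c P_d[OF assms(1)] by (cases x) (auto simp: mon_mul)
next
  case (SP_Q i j k)
  then show ?case using Q_a[OF assms(1)] Q_b Q_c Q_d' by (cases x) (auto simp: mon_mul)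
next
  case (SP_add f g)
  then show ?case by (metis fmul_add_left SP.SP_add)
next
  case (SP_smul f c)
  then show ?case by (simp add: fmul_smul_left SP.SP_smul)
next
  case (SP_eqv f g)
  then show ?case using eqv_rm SP.SP_eqv by blast
qed

lemma mon_SP: assumes "s \<noteq> 0" shows "mon w \<in> SP s"
proof (induction w rule: rev_induct)
  case Nil
  have "mon (Pw 0 0 0) \<in> SP s" by (rule SP_P)
  then show ?case by (simp add: Pw_def)
next
  case (snoc x w)
  then show ?case using SP_rm[OF assms snoc] by (simp add: mon_mul)
qed


lemma row_ent[simp]: "row (ent k l) = k" by (cases k; cases l) auto
lemma col_ent[simp]: "col (ent k l) = l" by (cases k; cases l) auto

lemma KS_0: "KS 0 = {[]}" by (auto simp: KS_def)
lemma KS_Suc: "KS (Suc n) = (\<lambda>(k, ks). k # ks) ` (UNIV \<times> KS n)"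
  by (auto simp: KS_def image_iff length_Suc_conv)
lemma finite_KS: "finite (KS n)"
proof -
  have "KS n \<subseteq> {xs. set xs \<subseteq> (UNIV::bool set) \<and> length xs = n}" by (auto simp: KS_def)
  then show ?thesis using finite_lists_length_eq[of "UNIV::bool set" n] finite_subset by auto
qed

lemma sum_KS_Suc: "sum f (KS (Suc n)) = (\<Sum>k\<in>UNIV. \<Sum>ks\<in>KS n. f (k # ks))"
proof -
  have inj: "inj_on (\<lambda>(k, ks). k # ks) (UNIV \<times> KS n)" by (auto simp: inj_on_def)
  have "sum f (KS (Suc n)) = sum (f \<circ> (\<lambda>(k, ks). k # ks)) (UNIV \<times> KS n)"
    unfolding KS_Suc by (rule sum.reindex[OF inj])
  also have "\<dots> = (\<Sum>k\<in>UNIV. \<Sum>ks\<in>KS n. f (k # ks))"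
    by (simp add: sum.cartesian_product split_def)
  finally show ?thesis .
qed

lemma sum_KS_1: "sum f (KS (Suc 0)) = f [False] + f [True]"
  by (simp add: sum_KS_Suc KS_0 UNIV_bool)

fun Mm :: "complex \<Rightarrow> word \<Rightarrow> bool \<Rightarrow> bool \<Rightarrow> complex" where
  "Mm s [] k l = (if k = l then 1 else 0)"
| "Mm s (x # u) k l = r1 s x (ent k False) * Mm s u False l + r1 s x (ent k True) * Mm s u True l"

lemma rform_single: "rform_w s u [y] = Mm s u (row y) (col y)"
proof (induction u arbitrary: y)
  case Nil
  then show ?case by (simp add: eps_w_def)
next
  case (Cons x u)
  show ?case by (simp add: sum_KS_1 lw_def rtw_def Cons)
qed

definition pre :: "gen \<Rightarrow> fa \<Rightarrow> fa" where
  "pre y f = (\<lambda>j. case j of [] \<Rightarrow> 0 | z # j' \<Rightarrow> if z = y then f j' else 0)"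

lemma fmul_mon_single: "fmul (mon [y]) f = pre y f"
  by (auto simp: fmul_mon_left' pre_def fun_eq_iff split: list.split)

lemma mon_cons_pre: "mon (y # u) = pre y (mon u)"
  by (auto simp: mon_def pre_def fun_eq_iff split: list.split)

lemma pre_sum: "pre y (\<lambda>v. \<Sum>k\<in>K. c k * f k v) = (\<lambda>j. \<Sum>k\<in>K. c k * pre y (f k) j)"
  by (auto simp: pre_def fun_eq_iff split: list.split)

lemma pre_add: "pre y (f + g) = pre y f + pre y g"
  by (auto simp: pre_def fun_eq_iff split: list.split)
lemma pre_smul: "pre y (smul c f) = smul c (pre y f)"
  by (auto simp: pre_def smul_def fun_eq_iff split: list.split)
lemma pre_zero: "pre y 0 = 0"
  by (auto simp: pre_def fun_eq_iff split: list.split)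
lemma pre_pre: "pre y (pre z f) = fmul (mon [y, z]) f"
  by (simp add: fmul_mon_single[symmetric] fmul_mon_left_assoc)

definition H :: "complex \<Rightarrow> word \<Rightarrow> bool \<Rightarrow> bool \<Rightarrow> fa" where
  "H s w l c = (\<lambda>v. \<Sum>ks\<in>KS (length w). Mm s (rtw w ks) l c * mon (lw w ks) v)"

lemma H_Nil: "H s [] l c = (if l = c then mon [] else 0)"
  by (auto simp: H_def KS_0 lw_def rtw_def fun_eq_iff)

lemma pre_H: "pre y (H s w l c) = (\<lambda>j. \<Sum>ks\<in>KS (length w). Mm s (rtw w ks) l c * pre y (mon (lw w ks)) j)"
  unfolding H_def by (rule pre_sum)

lemma H_Cons: "H s (x # w) l c =
   smul (r1 s (ent False (col x)) (ent l False)) (pre (ent (row x) False) (H s w False c))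
 + smul (r1 s (ent False (col x)) (ent l True)) (pre (ent (row x) False) (H s w True c))
 + smul (r1 s (ent True (col x)) (ent l False)) (pre (ent (row x) True) (H s w False c))
 + smul (r1 s (ent True (col x)) (ent l True)) (pre (ent (row x) True) (H s w True c))"
proof -
  have L: "H s (x # w) l c = (\<lambda>v. \<Sum>k\<in>UNIV. \<Sum>ks\<in>KS (length w).
       (r1 s (ent k (col x)) (ent l False) * Mm s (rtw w ks) False c
      + r1 s (ent k (col x)) (ent l True) * Mm s (rtw w ks) True c) * pre (ent (row x) k) (mon (lw w ks)) v)"
    by (simp add: H_def sum_KS_Suc lw_def rtw_def mon_cons_pre)
  show ?thesis unfolding L
    by (simp only: pre_H smul_def fun_eq_iff UNIV_bool) (simp add: sum.distrib sum_distrib_left algebra_simps)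
qed


lemma tens_mon: "tens (mon w) (mon v) = (\<lambda>p. if p = (w, v) then 1 else 0)"
  by (auto simp: tens_def mon_def fun_eq_iff)

lemma lsum_point: "lsum (\<lambda>p. if p = p0 then 1 else 0) F = F p0"
proof -
  have "{p. (if p = p0 then 1 else 0 :: complex) \<noteq> 0} = {p0}" by auto
  then show ?thesis by (simp add: lsum_def)
qed

lemma lsum_delta:
  assumes "finite K"
  shows "lsum (\<lambda>p. \<Sum>k\<in>K. if p = P k then r k else 0) F = (\<lambda>j. \<Sum>k\<in>K. r k * F (P k) j)"
proof
  fix j
  define c where "c = (\<lambda>p. \<Sum>k\<in>K. if p = P k then r k else 0)"
  have sub: "{p. c p \<noteq> 0} \<subseteq> P ` K"
  proof
    fix p assume "p \<in> {p. c p \<noteq> 0}"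
    then have "(\<Sum>k\<in>K. if p = P k then r k else 0) \<noteq> 0" by (simp add: c_def)
    then obtain k where "k \<in> K" "(if p = P k then r k else 0) \<noteq> 0" by (rule sum.not_neutral_contains_not_neutral)
    then show "p \<in> P ` K" by (auto split: if_splits)
  qed
  have "lsum c F j = (\<Sum>p\<in>{p. c p \<noteq> 0}. c p * F p j)" by (simp add: lsum_def)
  also have "\<dots> = (\<Sum>p\<in>P ` K. c p * F p j)"
    by (rule sum.mono_neutral_left) (use assms sub in auto)
  also have "\<dots> = (\<Sum>p\<in>P ` K. \<Sum>k\<in>K. if p = P k then r k * F p j else 0)"
    by (auto simp: c_def sum_distrib_right intro!: sum.cong)
  also have "\<dots> = (\<Sum>k\<in>K. \<Sum>p\<in>P ` K. if p = P k then r k * F p j else 0)"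
    by (rule sum.swap)
  also have "\<dots> = (\<Sum>k\<in>K. r k * F (P k) j)"
    using assms by (simp add: sum.delta')
  finally show "lsum c F j = (\<Sum>k\<in>K. r k * F (P k) j)" .
qed

lemma psi_w_prod: "psi_w s u v = (\<lambda>p. \<Sum>kl\<in>KS (length u) \<times> KS (length v).
     if p = (lw v (snd kl), lw u (fst kl)) then rform_w s (rtw u (fst kl)) (rtw v (snd kl)) else 0)"
  by (simp add: psi_w_def sum.cartesian_product split_def)

lemma mu_psi: "mu_s1 \<sigma> (Psi s (tens (mon w) (mon v))) = (\<lambda>j. \<Sum>kl\<in>KS (length w) \<times> KS (length v).
     rform_w s (rtw w (fst kl)) (rtw v (snd kl)) * fmul (\<sigma> (mon (lw v (snd kl)))) (mon (lw w (fst kl))) j)"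
proof -
  have e: "Psi s (tens (mon w) (mon v)) = psi_w s w v"
    by (simp add: Psi_def tens_mon lsum_point)
  show ?thesis
    unfolding mu_s1_def e psi_w_prod
    by (subst lsum_delta) (auto simp: finite_KS)
qed

lemma KS1_cases: "ls \<in> KS (Suc 0) \<Longrightarrow> \<exists>l. ls = [l]"
  by (auto simp: KS_def length_Suc_conv)

lemma ab_aux: "(a::'a::ab_group_add) + (m - f) - m = a - f"
  by (simp add: algebra_simps)

definition Tg :: "complex \<Rightarrow> word \<Rightarrow> gen \<Rightarrow> fa" where
  "Tg s w x = pre (ent (row x) False) (H s w False (col x)) + pre (ent (row x) True) (H s w True (col x))"



lemma b1_gen:
  assumes sig: "\<forall>y. \<sigma> (mon [y]) - smul (s ^ 3) (mon [y]) \<in> Iq s"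
  shows "eqv s (b1 s \<sigma> (mon w) (mon [x])) (mon (w @ [x]) - smul (s ^ 3) (Tg s w x))"
proof -
  define K where "K = KS (length w) \<times> KS (Suc 0)"
  define r where "r = (\<lambda>kl. rform_w s (rtw w (fst kl)) (rtw [x] (snd kl)))"
  define F where "F = (\<lambda>kl. fmul (\<sigma> (mon (lw [x] (snd kl)))) (mon (lw w (fst kl))))"
  define G where "G = (\<lambda>kl. smul (s ^ 3) (mon (lw [x] (snd kl) @ lw w (fst kl))))"
  have finK: "finite K" by (simp add: K_def finite_KS)
  have mu: "mu_s1 \<sigma> (Psi s (tens (mon w) (mon [x]))) = (\<lambda>j. \<Sum>kl\<in>K. r kl * F kl j)"
    unfolding mu_psi K_def r_def F_def by simp
  have FG: "F kl - G kl \<in> Iq s" if "kl \<in> K" for kl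
  proof -
    have "snd kl \<in> KS (Suc 0)" using that by (auto simp: K_def)
    then obtain l where l: "snd kl = [l]" by (blast dest: KS1_cases)
    have "F kl - G kl = fmul (\<sigma> (mon [ent (row x) l]) - smul (s ^ 3) (mon [ent (row x) l])) (mon (lw w (fst kl)))"
      unfolding F_def G_def l by (simp add: lw_def fmul_diff_left fmul_smul_left mon_mul)
    then show ?thesis by (simp only:) (rule Iq_rm[OF sig[rule_format]])
  qed
  have D: "(\<lambda>j. \<Sum>kl\<in>K. r kl * F kl j) - (\<lambda>j. \<Sum>kl\<in>K. r kl * G kl j) = (\<Sum>kl\<in>K. smul (r kl) (F kl - G kl))"
    by (simp add: fun_eq_iff sum_fun_apply smul_def right_diff_distrib sum_subtractf)
  have DI: "(\<lambda>j. \<Sum>kl\<in>K. r kl * F kl j) - (\<lambda>j. \<Sum>kl\<in>K. r kl * G kl j) \<in> Iq s"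
    unfolding D by (rule Iq_sum[OF finK]) (rule Iq.Iq_smul, erule FG)
  have T: "(\<lambda>j. \<Sum>kl\<in>K. r kl * G kl j) = smul (s ^ 3) (Tg s w x)"
  proof
    fix j
    have "(\<Sum>kl\<in>K. r kl * G kl j) = (\<Sum>ks\<in>KS (length w). \<Sum>ls\<in>KS (Suc 0). r (ks, ls) * G (ks, ls) j)"
      unfolding K_def by (simp add: sum.cartesian_product)
    also have "\<dots> = smul (s ^ 3) (Tg s w x) j"
      by (simp add: sum_KS_1 r_def G_def Tg_def pre_H rform_single lw_def rtw_def smul_def
          mon_cons_pre sum.distrib sum_distrib_left algebra_simps)
    finally show "(\<Sum>kl\<in>K. r kl * G kl j) = smul (s ^ 3) (Tg s w x) j" .
  qed
  have eq: "b1 s \<sigma> (mon w) (mon [x]) - (mon (w @ [x]) - smul (s ^ 3) (Tg s w x))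
      = - ((\<lambda>j. \<Sum>kl\<in>K. r kl * F kl j) - (\<lambda>j. \<Sum>kl\<in>K. r kl * G kl j))"
    unfolding b1_def mu T mon_mul by (simp only: minus_diff_eq diff_diff_eq2 diff_add_eq diff_diff_eq add.commute) (rule ab_aux)
  show ?thesis unfolding eqv_def eq by (rule Iq_neg[OF DI])
qed


fun ew :: "word \<Rightarrow> int" where
  "ew [] = 0"
| "ew (x # w) = (if col x then -1 else 1) + ew w"

lemma smul_pre_smul_mon: "smul c1 (pre y (smul c2 (mon w))) = smul (c1 * c2) (mon (y # w))"
  by (simp add: pre_smul smul_smul mon_cons_pre)

lemma pre_zero': "pre y (\<lambda>a. 0) = (\<lambda>a. 0)"
  using pre_zero by (simp add: zero_fun_def)
lemma smul_zero'': "smul c (\<lambda>a. 0) = (\<lambda>a. 0)"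
  by (simp add: smul_def)

lemma H_TF: "H s w True False = 0"
proof (induction w)
  case Nil then show ?case by (simp add: H_Nil)
next
  case (Cons x w) then show ?case by (cases x) (simp_all add: H_Cons pre_zero pre_zero' smul_zero smul_zero' smul_zero'')
qed

lemma H_FF: assumes "s \<noteq> 0" shows "H s w False False = smul (s powi ew w) (mon w)"
proof (induction w)
  case Nil then show ?case by (simp add: H_Nil smul_one)
next
  case (Cons x w)
  show ?case
    by (cases x) (simp_all add: H_Cons Cons H_TF pre_zero pre_zero' smul_zero smul_zero' smul_zero'' smul_pre_smul_mon
        power_int_diff power_int_add power_int_minus assms field_simps)
qed

lemma H_TT: assumes "s \<noteq> 0" shows "H s w True True = smul (s powi (- ew w)) (mon w)"
proof (induction w)
  case Nil then show ?case by (simp add: H_Nil smul_one)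
next
  case (Cons x w)
  show ?case
    by (cases x) (simp_all add: H_Cons Cons H_TF pre_zero pre_zero' smul_zero smul_zero' smul_zero'' smul_pre_smul_mon
        power_int_diff power_int_add power_int_minus assms field_simps)
qed

lemma Tg_a: assumes "s \<noteq> 0" shows "Tg s w Ga = smul (s powi ew w) (mon (Ga # w))"
  by (simp add: Tg_def H_FF[OF assms] H_TF pre_zero pre_smul mon_cons_pre)
lemma Tg_c: assumes "s \<noteq> 0" shows "Tg s w Gc = smul (s powi ew w) (mon (Gc # w))"
  by (simp add: Tg_def H_FF[OF assms] H_TF pre_zero pre_smul mon_cons_pre)
lemma Tg_b: assumes "s \<noteq> 0" shows "Tg s w Gb = pre Ga (H s w False True) + smul (s powi (- ew w)) (mon (Gb # w))"
  by (simp add: Tg_def H_TT[OF assms] pre_smul mon_cons_pre)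
lemma Tg_d: assumes "s \<noteq> 0" shows "Tg s w Gd = pre Gc (H s w False True) + smul (s powi (- ew w)) (mon (Gd # w))"
  by (simp add: Tg_def H_TT[OF assms] pre_smul mon_cons_pre)

lemma H_FT_d: "H s (Gd # w) False True = smul (1 / s) (pre Gd (H s w False True))"
  by (simp add: H_Cons pre_zero smul_zero smul_zero')
lemma H_FT_b: "H s (Gb # w) False True = smul (1 / s) (pre Gb (H s w False True))"
  by (simp add: H_Cons pre_zero smul_zero smul_zero')
lemma H_FT_c: "H s (Gc # w) False True = smul s (pre Gc (H s w False True)) + smul (1 / s * (s\<^sup>2 - 1 / s\<^sup>2)) (pre Gd (H s w True True))"
  by (simp add: H_Cons pre_zero smul_zero smul_zero')


definition UU :: "complex \<Rightarrow> (fa \<Rightarrow> fa) \<Rightarrow> fa set" where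
  "UU s \<sigma> = {h. \<exists>(n::nat) fs gs. (\<forall>i<n. fs i \<in> FA \<and> gs i \<in> FA)
           \<and> h - (\<Sum>i<n. b1 s \<sigma> (fs i) (gs i)) \<in> Iq s}"

lemma UU_intro: "\<forall>i<n. fs i \<in> FA \<and> gs i \<in> FA \<Longrightarrow> h - (\<Sum>i<(n::nat). b1 s \<sigma> (fs i) (gs i)) \<in> Iq s \<Longrightarrow> h \<in> UU s \<sigma>"
  unfolding UU_def by (rule CollectI, rule exI[of _ n], rule exI[of _ fs], rule exI[of _ gs]) (rule conjI)

lemma UU_elim: assumes "h \<in> UU s \<sigma>"
  obtains n :: nat and fs gs :: "nat \<Rightarrow> fa" where "\<forall>i<n. fs i \<in> FA \<and> gs i \<in> FA" "h - (\<Sum>i<n. b1 s \<sigma> (fs i) (gs i)) \<in> Iq s"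
proof -
  from assms have "\<exists>(n::nat) fs gs. (\<forall>i<n. fs i \<in> FA \<and> gs i \<in> FA) \<and> h - (\<Sum>i<n. b1 s \<sigma> (fs i) (gs i)) \<in> Iq s"
    unfolding UU_def by (rule CollectD)
  then show ?thesis using that by (elim exE conjE)
qed

lemma mon_FA: "mon w \<in> FA"
proof -
  have "{v. mon w v \<noteq> 0} = {w}" by (auto simp: mon_def)
  then show ?thesis by (simp add: FA_def fin_def)
qed

lemma smul_FA: "f \<in> FA \<Longrightarrow> smul c f \<in> FA"
proof -
  assume "f \<in> FA"
  then have "finite {i. f i \<noteq> 0}" by (simp add: FA_def fin_def)
  moreover have "{i. smul c f i \<noteq> 0} \<subseteq> {i. f i \<noteq> 0}" by (auto simp: smul_def)
  ultimately show ?thesis by (simp add: FA_def fin_def finite_subset)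
qed

lemma UU_Iq: "h \<in> Iq s \<Longrightarrow> h \<in> UU s \<sigma>"
  unfolding UU_def by (rule CollectI, rule exI[of _ 0]) simp

lemma UU_eqv: "h \<in> UU s \<sigma> \<Longrightarrow> eqv s h' h \<Longrightarrow> h' \<in> UU s \<sigma>"
proof -
  assume "h \<in> UU s \<sigma>" "eqv s h' h"
  obtain n :: nat and fs gs :: "nat \<Rightarrow> fa" where A: "\<forall>i<n. fs i \<in> FA \<and> gs i \<in> FA" and B: "h - (\<Sum>i<n. b1 s \<sigma> (fs i) (gs i)) \<in> Iq s"
    using \<open>h \<in> UU s \<sigma>\<close> by (rule UU_elim)
  have eq: "h' - (\<Sum>i<n. b1 s \<sigma> (fs i) (gs i)) = (h' - h) + (h - (\<Sum>i<n. b1 s \<sigma> (fs i) (gs i)))" by simp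
  have E: "h' - h \<in> Iq s" using \<open>eqv s h' h\<close> unfolding eqv_def .
  have "h' - (\<Sum>i<n. b1 s \<sigma> (fs i) (gs i)) \<in> Iq s"
    unfolding eq by (rule Iq_add[OF E B])
  then show ?thesis using A by (intro UU_intro)
qed

lemma UU_b1: "f \<in> FA \<Longrightarrow> g \<in> FA \<Longrightarrow> b1 s \<sigma> f g \<in> UU s \<sigma>"
  unfolding UU_def
  apply (rule CollectI, rule exI[of _ 1], rule exI[of _ "\<lambda>_. f"], rule exI[of _ "\<lambda>_. g"])
  by (simp add: Iq.Iq_zero)

lemma sum_lessThan_add: "(\<Sum>i<m + (n::nat). f i) = (\<Sum>i<m. f i) + (\<Sum>i<n. f (m + i))"
  by (induction n) (simp_all add: add.assoc)

lemma UU_add: "h1 \<in> UU s \<sigma> \<Longrightarrow> h2 \<in> UU s \<sigma> \<Longrightarrow> h1 + h2 \<in> UU s \<sigma>"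
proof -
  assume "h1 \<in> UU s \<sigma>" "h2 \<in> UU s \<sigma>"
  obtain n1 :: nat and fs1 gs1 :: "nat \<Rightarrow> fa" where
    A1: "\<forall>i<n1. fs1 i \<in> FA \<and> gs1 i \<in> FA" and B1: "h1 - (\<Sum>i<n1. b1 s \<sigma> (fs1 i) (gs1 i)) \<in> Iq s"
    using \<open>h1 \<in> UU s \<sigma>\<close> by (rule UU_elim)
  obtain n2 :: nat and fs2 gs2 :: "nat \<Rightarrow> fa" where
    A2: "\<forall>i<n2. fs2 i \<in> FA \<and> gs2 i \<in> FA" and B2: "h2 - (\<Sum>i<n2. b1 s \<sigma> (fs2 i) (gs2 i)) \<in> Iq s"
    using \<open>h2 \<in> UU s \<sigma>\<close> by (rule UU_elim)
  define fs where "fs = (\<lambda>i. if i < n1 then fs1 i else fs2 (i - n1))"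
  define gs where "gs = (\<lambda>i. if i < n1 then gs1 i else gs2 (i - n1))"
  have A: "\<forall>i<n1 + n2. fs i \<in> FA \<and> gs i \<in> FA"
    using A1 A2 by (auto simp: fs_def gs_def)
  have S: "(\<Sum>i<n1 + n2. b1 s \<sigma> (fs i) (gs i)) = (\<Sum>i<n1. b1 s \<sigma> (fs1 i) (gs1 i)) + (\<Sum>i<n2. b1 s \<sigma> (fs2 i) (gs2 i))"
    unfolding sum_lessThan_add by (simp add: fs_def gs_def)
  have "h1 + h2 - (\<Sum>i<n1 + n2. b1 s \<sigma> (fs i) (gs i)) = (h1 - (\<Sum>i<n1. b1 s \<sigma> (fs1 i) (gs1 i))) + (h2 - (\<Sum>i<n2. b1 s \<sigma> (fs2 i) (gs2 i)))"
    unfolding S by (simp add: algebra_simps)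
  then have "h1 + h2 - (\<Sum>i<n1 + n2. b1 s \<sigma> (fs i) (gs i)) \<in> Iq s"
    using Iq_add[OF B1 B2] by (simp only:)
  then show ?thesis using A by (intro UU_intro)
qed

lemma lsum_smul: "lsum (smul c T) F = smul c (lsum T F)"
proof (cases "c = 0")
  case True
  then show ?thesis by (simp add: lsum_def smul_def fun_eq_iff)
next
  case False
  then have "{i. smul c T i \<noteq> 0} = {i. T i \<noteq> 0}" by (auto simp: smul_def)
  then show ?thesis by (simp add: lsum_def smul_def fun_eq_iff sum_distrib_left mult.assoc)
qed

lemma b1_smul: "b1 s \<sigma> (smul c f) g = smul c (b1 s \<sigma> f g)"
proof -
  have t: "tens (smul c f) g = smul c (tens f g)" by (auto simp: tens_def smul_def fun_eq_iff)
  show ?thesis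
    by (simp add: b1_def fmul_smul_left t Psi_def mu_s1_def lsum_smul smul_diff)
qed

lemma sum_smul_fa: "smul c (\<Sum>i<(n::nat). (F i :: fa)) = (\<Sum>i<n. smul c (F i))"
  by (simp add: fun_eq_iff smul_def sum_fun_apply sum_distrib_left)

lemma UU_smul: "h \<in> UU s \<sigma> \<Longrightarrow> smul c h \<in> UU s \<sigma>"
proof -
  assume "h \<in> UU s \<sigma>"
  then obtain n :: nat and fs gs :: "nat \<Rightarrow> fa" where A: "\<forall>i<n. fs i \<in> FA \<and> gs i \<in> FA" and B: "h - (\<Sum>i<n. b1 s \<sigma> (fs i) (gs i)) \<in> Iq s"
    by (rule UU_elim)
  have A': "\<forall>i<n. smul c (fs i) \<in> FA \<and> gs i \<in> FA" using A smul_FA by simp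
  have "smul c h - (\<Sum>i<n. b1 s \<sigma> (smul c (fs i)) (gs i)) = smul c (h - (\<Sum>i<n. b1 s \<sigma> (fs i) (gs i)))"
    by (simp add: b1_smul smul_diff sum_smul_fa)
  then have "smul c h - (\<Sum>i<n. b1 s \<sigma> (smul c (fs i)) (gs i)) \<in> Iq s" using Iq.Iq_smul[OF B] by simp
  then show ?thesis using A' by (intro UU_intro)
qed

lemma SP_UU:
  assumes P: "\<And>i j k. mon (Pw i j k) \<in> UU s \<sigma>" and Q: "\<And>i j k. mon (Qw i j k) \<in> UU s \<sigma>"
  shows "f \<in> SP s \<Longrightarrow> f \<in> UU s \<sigma>"
proof (induction f rule: SP.induct)
  case (SP_P i j k) then show ?case by (rule P)
next
  case (SP_Q i j k) then show ?case by (rule Q)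
next
  case (SP_add f g) show ?case by (rule UU_add[OF SP_add.IH])
next
  case (SP_smul f c) show ?case by (rule UU_smul[OF SP_smul.IH])
next
  case (SP_eqv f g) then show ?case using UU_eqv by blast
qed

lemma FA_decomp: "h \<in> FA \<Longrightarrow> h = (\<Sum>w\<in>{w. h w \<noteq> 0}. smul (h w) (mon w))"
proof -
  assume "h \<in> FA"
  then have fin: "finite {w. h w \<noteq> 0}" by (simp add: FA_def fin_def)
  show ?thesis
  proof
    fix v
    have "(\<Sum>w\<in>{w. h w \<noteq> 0}. smul (h w) (mon w)) v = (\<Sum>w\<in>{w. h w \<noteq> 0}. if w = v then h w else 0)"
      by (simp add: sum_fun_apply smul_def mon_def if_distrib cong: if_cong) (rule sum.cong, auto)
    also have "\<dots> = h v" using fin by (simp add: sum.delta')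
    finally show "h v = (\<Sum>w\<in>{w. h w \<noteq> 0}. smul (h w) (mon w)) v" by simp
  qed
qed

lemma UU_sum: "finite A \<Longrightarrow> (\<And>a. a \<in> A \<Longrightarrow> F a \<in> UU s \<sigma>) \<Longrightarrow> sum F A \<in> UU s \<sigma>"
proof (induction A rule: finite_induct)
  case empty
  show ?case unfolding sum.empty by (rule UU_Iq[OF Iq.Iq_zero])
next
  case (insert a A)
  have 1: "F a \<in> UU s \<sigma>" by (rule insert.prems) simp
  have 2: "sum F A \<in> UU s \<sigma>" by (rule insert.IH) (rule insert.prems, simp)
  show ?case unfolding sum.insert[OF insert(1,2)] by (rule UU_add[OF 1 2])
qed


lemma ew_append: "ew (u @ v) = ew u + ew v"
  by (induction u) auto
lemma ew_replicate: "ew (replicate n x) = int n * (if col x then -1 else 1)"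
  by (induction n) (auto simp: algebra_simps)
lemma ew_Pw: "ew (Pw i j k) = int i - int j + int k"
  by (simp add: Pw_def ew_append ew_replicate)
lemma ew_Qw: "ew (Qw i j k) = - int i - int j + int k"
  by (simp add: Qw_def ew_append ew_replicate)

lemma powi_conv: "s \<noteq> 0 \<Longrightarrow> (s::complex) powi (int a - int b + int c) = s ^ a * s ^ c / s ^ b"
  by (simp add: power_int_add power_int_diff)
lemma powi_conv2: "s \<noteq> 0 \<Longrightarrow> (s::complex) powi (- (- int a - int b + int c)) = s ^ a * s ^ b / s ^ c"
proof -
  assume "s \<noteq> 0"
  have e: "- (- int a - int b + int c) = int a - int c + int b" by simp
  have "s powi (- (- int a - int b + int c)) = s powi (int a - int c + int b)" by (simp only: e)
  also have "\<dots> = s ^ a * s ^ b / s ^ c" by (rule powi_conv[OF \<open>s \<noteq> 0\<close>])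
  finally show ?thesis .
qed

lemma smul_comb: "smul a m - smul b (smul c m) = smul (a - b * c) m"
  by (simp add: smul_def fun_eq_iff algebra_simps)

lemma coefA: "(s::complex) \<noteq> 0 \<Longrightarrow> (1 / s\<^sup>2) ^ k * (1 / s\<^sup>2) ^ j - s ^ 3 * (s ^ i * s ^ k / s ^ j) = (1 - s ^ (3 + i + j + 3 * k)) / s ^ (2 * j + 2 * k)"
  apply (simp add: field_simps)
  apply (simp add: power_add[symmetric] mult.assoc[symmetric] power_mult_distrib[symmetric] power_mult[symmetric])
  apply (simp add: algebra_simps)
  done

locale ctx =
  fixes s :: complex and \<sigma> :: "fa \<Rightarrow> fa"
  assumes s0: "s \<noteq> 0"
    and nr: "\<forall>n::nat. n > 0 \<longrightarrow> (s\<^sup>2) ^ n \<noteq> 1"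
    and sig: "\<forall>y. \<sigma> (mon [y]) - smul (s ^ 3) (mon [y]) \<in> Iq s"
begin

lemma pw_ne1: "N > 0 \<Longrightarrow> s ^ N \<noteq> 1"
proof
  assume "N > 0" "s ^ N = 1"
  then have "(s\<^sup>2) ^ N = 1" by (metis power_mult_distrib power_one power2_eq_square power_mult mult.commute)
  then show False using nr \<open>N > 0\<close> by blast
qed

lemma relU: "mon (w @ [x]) - smul (s ^ 3) (Tg s w x) \<in> UU s \<sigma>"
  using UU_eqv[OF UU_b1[OF mon_FA mon_FA] eqv_sym[OF b1_gen[OF sig]]] .

lemma UU_solve: "R \<in> UU s \<sigma> \<Longrightarrow> eqv s R (smul C m) \<Longrightarrow> C \<noteq> 0 \<Longrightarrow> m \<in> UU s \<sigma>"
proof -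
  assume R: "R \<in> UU s \<sigma>" and E: "eqv s R (smul C m)" and C: "C \<noteq> 0"
  have "eqv s (smul (1 / C) R) (smul (1 / C) (smul C m))" by (rule eqv_smul[OF E])
  then have "eqv s m (smul (1 / C) R)" using C by (simp add: smul_smul smul_one eqv_sym)
  then show ?thesis using UU_eqv[OF UU_smul[OF R]] by blast
qed

lemma UU_solve2: "R \<in> UU s \<sigma> \<Longrightarrow> X \<in> UU s \<sigma> \<Longrightarrow> eqv s R (smul C m + smul D X) \<Longrightarrow> C \<noteq> 0 \<Longrightarrow> m \<in> UU s \<sigma>"
proof -
  assume R: "R \<in> UU s \<sigma>" and X: "X \<in> UU s \<sigma>" and E: "eqv s R (smul C m + smul D X)" and C: "C \<noteq> 0"
  have R': "R + smul (- D) X \<in> UU s \<sigma>" by (rule UU_add[OF R UU_smul[OF X]])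
  have "eqv s (R + smul (- D) X) (smul C m + smul D X + smul (- D) X)" by (rule eqv_add[OF E eqv_refl])
  moreover have "smul C m + smul D X + smul (- D) X = smul C m" by (simp add: smul_def fun_eq_iff)
  ultimately have "eqv s (R + smul (- D) X) (smul C m)" by simp
  then show ?thesis using UU_solve[OF R' _ C] by blast
qed

lemma P_a_eq: "eqv s (mon (Pw i j k @ [Ga])) (smul ((1 / s\<^sup>2) ^ k * (1 / s\<^sup>2) ^ j) (mon (Pw (Suc i) j k)))"
proof -
  have 1: "eqv s (mon (Pw i j k @ [Ga])) (smul ((1 / s\<^sup>2) ^ k) (mon (replicate i Ga @ replicate j Gb @ [Ga] @ replicate k Gc)))"
    using move1[OF sw_ca[OF s0], where u="replicate i Ga @ replicate j Gb" and n=k and v="[]"] by (simp add: Pw_def)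
  have 2: "eqv s (mon (replicate i Ga @ replicate j Gb @ [Ga] @ replicate k Gc)) (smul ((1 / s\<^sup>2) ^ j) (mon (Pw (Suc i) j k)))"
    using move1[OF sw_ba[OF s0], where u="replicate i Ga" and n=j and v="replicate k Gc"] by (simp add: Pw_def rep_cons)
  show ?thesis using eqv_chain[OF 1 2] .
qed

lemma famA: "mon (Pw (Suc i) j k) \<in> UU s \<sigma>"
proof -
  have R: "mon (Pw i j k @ [Ga]) - smul (s ^ 3) (smul (s powi ew (Pw i j k)) (mon (Ga # Pw i j k))) \<in> UU s \<sigma>"
    using relU[of "Pw i j k" Ga] by (simp add: Tg_a[OF s0])
  have g: "Ga # Pw i j k = Pw (Suc i) j k" by (simp add: Pw_def)
  have E: "eqv s (mon (Pw i j k @ [Ga]) - smul (s ^ 3) (smul (s powi ew (Pw i j k)) (mon (Ga # Pw i j k))))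
     (smul ((1 / s\<^sup>2) ^ k * (1 / s\<^sup>2) ^ j - s ^ 3 * (s ^ i * s ^ k / s ^ j)) (mon (Pw (Suc i) j k)))"
  proof -
    have E0: "eqv s (mon (Pw i j k @ [Ga]) - smul (s ^ 3) (smul (s powi ew (Pw i j k)) (mon (Ga # Pw i j k))))
       (smul ((1 / s\<^sup>2) ^ k * (1 / s\<^sup>2) ^ j) (mon (Pw (Suc i) j k)) - smul (s ^ 3) (smul (s powi ew (Pw i j k)) (mon (Ga # Pw i j k))))"
      by (rule eqv_diff[OF P_a_eq eqv_refl])
    have eq: "smul ((1 / s\<^sup>2) ^ k * (1 / s\<^sup>2) ^ j) (mon (Pw (Suc i) j k)) - smul (s ^ 3) (smul (s powi ew (Pw i j k)) (mon (Ga # Pw i j k)))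
       = smul ((1 / s\<^sup>2) ^ k * (1 / s\<^sup>2) ^ j - s ^ 3 * (s ^ i * s ^ k / s ^ j)) (mon (Pw (Suc i) j k))"
      unfolding g ew_Pw powi_conv[OF s0] by (simp add: smul_def fun_eq_iff algebra_simps)
    show ?thesis using E0 unfolding eq .
  qed
  have C: "(1 / s\<^sup>2) ^ k * (1 / s\<^sup>2) ^ j - s ^ 3 * (s ^ i * s ^ k / s ^ j) \<noteq> 0"
    unfolding coefA[OF s0] using pw_ne1[of "3 + i + j + 3 * k"] s0 by simp
  show ?thesis by (rule UU_solve[OF R E C])
qed

end


lemma H_FT_rep_d: "H s (replicate i Gd) False True = 0"
proof (induction i)
  case 0 then show ?case by (simp add: H_Nil)
next
  case (Suc i) then show ?case by (simp add: H_FT_d pre_zero pre_zero' smul_zero smul_zero'')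
qed

lemma smul_comb2: "smul a m - smul b (smul c (smul d m)) = smul (a - b * (c * d)) m"
  by (simp add: smul_def fun_eq_iff algebra_simps)

context ctx begin

lemma famC: "mon (Qw i 0 (Suc k)) \<in> UU s \<sigma>"
proof -
  let ?w = "Qw i 0 k"
  let ?m = "mon (Qw i 0 (Suc k))"
  have R: "mon (?w @ [Gc]) - smul (s ^ 3) (smul (s powi ew ?w) (mon (Gc # ?w))) \<in> UU s \<sigma>"
    using relU[of ?w Gc] unfolding Tg_c[OF s0] .
  have w1: "?w @ [Gc] = Qw i 0 (Suc k)" by (simp add: Qw_def replicate_append_same)
  have cw: "eqv s (mon (Gc # ?w)) (smul ((s\<^sup>2) ^ i) ?m)"
    using move2[OF sw_cd, where u="[]" and n=i and v="replicate k Gc"] by (simp add: Qw_def)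
  have ew: "ew ?w = int 0 - int i + int k" by (simp add: ew_Qw)
  have E: "eqv s (mon (?w @ [Gc]) - smul (s ^ 3) (smul (s powi ew ?w) (mon (Gc # ?w))))
      (smul (1 - s ^ 3 * (s ^ 0 * s ^ k / s ^ i * (s\<^sup>2) ^ i)) ?m)"
  proof -
    have "eqv s (mon (?w @ [Gc]) - smul (s ^ 3) (smul (s powi ew ?w) (mon (Gc # ?w))))
      (?m - smul (s ^ 3) (smul (s powi ew ?w) (smul ((s\<^sup>2) ^ i) ?m)))"
      unfolding w1 by (rule eqv_diff[OF eqv_refl eqv_smul[OF eqv_smul[OF cw]]])
    then show ?thesis unfolding ew powi_conv[OF s0]
      using smul_comb2[of 1 ?m] by (simp add: smul_one)
  qed
  have C: "1 - s ^ 3 * (s ^ 0 * s ^ k / s ^ i * (s\<^sup>2) ^ i) \<noteq> 0"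
  proof -
    have "1 - s ^ 3 * (s ^ 0 * s ^ k / s ^ i * (s\<^sup>2) ^ i) = 1 - s ^ (3 + i + k)"
      using s0 by (simp add: power_add power_mult_distrib power2_eq_square field_simps)
    then show ?thesis using pw_ne1[of "3 + i + k"] by simp
  qed
  show ?thesis by (rule UU_solve[OF R E C])
qed

lemma famBC: "mon (Qw 0 1 1) \<in> UU s \<sigma>"
proof -
  have R: "mon ([Gb] @ [Gc]) - smul (s ^ 3) (smul (s powi ew [Gb]) (mon (Gc # [Gb]))) \<in> UU s \<sigma>"
    using relU[of "[Gb]" Gc] unfolding Tg_c[OF s0] .
  have cb: "eqv s (mon [Gc, Gb]) (mon [Gb, Gc])"
    using sw_cb[of s "[]" "[]"] by (simp add: smul_one)
  have E: "eqv s (mon ([Gb] @ [Gc]) - smul (s ^ 3) (smul (s powi ew [Gb]) (mon (Gc # [Gb]))))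
      (smul (1 - s ^ 3 * (s powi ew [Gb] * 1)) (mon (Qw 0 1 1)))"
  proof -
    have E0: "eqv s (mon [Gb, Gc] - smul (s ^ 3) (smul (s powi ew [Gb]) (mon [Gc, Gb])))
      (mon [Gb, Gc] - smul (s ^ 3) (smul (s powi ew [Gb]) (mon [Gb, Gc])))"
      by (rule eqv_diff[OF eqv_refl eqv_smul[OF eqv_smul[OF cb]]])
    have eq: "mon [Gb, Gc] - smul (s ^ 3) (smul (s powi ew [Gb]) (mon [Gb, Gc])) = smul (1 - s ^ 3 * (s powi ew [Gb] * 1)) (mon (Qw 0 1 1))"
      by (simp add: smul_def fun_eq_iff algebra_simps Qw_def)
    have e2: "[Gb] @ [Gc] = [Gb, Gc]" by simp
    show ?thesis unfolding e2 using E0 unfolding eq .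
  qed
  have C: "1 - s ^ 3 * (s powi ew [Gb] * 1) \<noteq> 0"
  proof -
    have "1 - s ^ 3 * (s powi ew [Gb] * 1) = 1 - s ^ 2"
      using s0 by (simp add: power_int_minus field_simps power2_eq_square power3_eq_cube)
    then show ?thesis using pw_ne1[of 2] by simp
  qed
  show ?thesis by (rule UU_solve[OF R E C])
qed

lemma famD: "mon (Qw (Suc i) 0 0) \<in> UU s \<sigma>"
proof -
  let ?w = "replicate i Gd"
  let ?m = "mon (Qw (Suc i) 0 0)"
  have R: "mon (?w @ [Gd]) - smul (s ^ 3) (pre Gc (H s ?w False True) + smul (s powi (- ew ?w)) (mon (Gd # ?w))) \<in> UU s \<sigma>"
    using relU[of ?w Gd] unfolding Tg_d[OF s0] .
  have e1: "?w @ [Gd] = Qw (Suc i) 0 0" by (simp add: Qw_def replicate_append_same)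
  have e2: "Gd # ?w = Qw (Suc i) 0 0" by (simp add: Qw_def)
  have ew: "- ew ?w = int i" by (simp add: ew_replicate)
  have eq: "mon (?w @ [Gd]) - smul (s ^ 3) (pre Gc (H s ?w False True) + smul (s powi (- ew ?w)) (mon (Gd # ?w)))
      = smul (1 - s ^ (3 + i)) ?m"
    unfolding e1 e2 ew H_FT_rep_d by (simp add: pre_zero smul_def fun_eq_iff power_add algebra_simps)
  have C: "1 - s ^ (3 + i) \<noteq> 0" using pw_ne1[of "3 + i"] by simp
  show ?thesis using R unfolding eq by (rule UU_solve[OF _ eqv_refl C])
qed

lemma famOne: "mon (Qw 0 0 0) \<in> UU s \<sigma>"
proof -
  let ?O = "mon []" and ?B = "mon [Gb, Gc]"
  have R: "mon ([Gd] @ [Ga]) - smul (s ^ 3) (smul (s powi ew [Gd]) (mon (Ga # [Gd]))) \<in> UU s \<sigma>"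
    using relU[of "[Gd]" Ga] unfolding Tg_a[OF s0] .
  have da: "eqv s (mon [Gd, Ga]) (smul (1 / s\<^sup>2) ?B + ?O)" using rel_da[of s "[]" "[]"] by simp
  have ad: "eqv s (mon [Ga, Gd]) (smul (s\<^sup>2) ?B + ?O)" using rel_ad[of s "[]" "[]"] by simp
  have E0: "eqv s (mon ([Gd] @ [Ga]) - smul (s ^ 3) (smul (s powi ew [Gd]) (mon (Ga # [Gd]))))
     (smul (1 / s\<^sup>2) ?B + ?O - smul (s ^ 3) (smul (s powi ew [Gd]) (smul (s\<^sup>2) ?B + ?O)))"
    using eqv_diff[OF da eqv_smul[OF eqv_smul[OF ad]]] by simp
  have eq: "smul (1 / s\<^sup>2) ?B + ?O - smul (s ^ 3) (smul (s powi ew [Gd]) (smul (s\<^sup>2) ?B + ?O))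
     = smul (1 - s\<^sup>2) ?O + smul (1 / s\<^sup>2 - s ^ 4) ?B"
    using s0 by (simp add: smul_def fun_eq_iff power_int_minus field_simps power2_eq_square power3_eq_cube power4_eq_xxxx)
  have C: "1 - s\<^sup>2 \<noteq> 0" using pw_ne1[of 2] by simp
  have "?O \<in> UU s \<sigma>"
    by (rule UU_solve2[OF R famBC[unfolded Qw_def, simplified] E0[unfolded eq] C])
  then show ?thesis by (simp add: Qw_def)
qed

end


lemma fmul_mon_nil: "fmul (mon []) f = f"
  by (simp add: fmul_mon_left' fun_eq_iff)

lemma pre_fmul: "pre y (fmul (mon u) f) = fmul (mon (y # u)) f"
  using fmul_mon_left_assoc[of "[y]" u f] by (simp add: fmul_mon_single)

lemma Hpre_d: "H s (replicate i Gd @ v) False True = smul ((1 / s) ^ i) (fmul (mon (replicate i Gd)) (H s v False True))"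
proof (induction i)
  case 0 then show ?case by (simp add: fmul_mon_nil smul_one)
next
  case (Suc i) then show ?case by (simp add: H_FT_d pre_smul smul_smul pre_fmul)
qed

lemma Hpre_b: "H s (replicate j Gb @ v) False True = smul ((1 / s) ^ j) (fmul (mon (replicate j Gb)) (H s v False True))"
proof (induction j)
  case 0 then show ?case by (simp add: fmul_mon_nil smul_one)
next
  case (Suc j) then show ?case by (simp add: H_FT_b pre_smul smul_smul pre_fmul)
qed

definition gk :: "complex \<Rightarrow> nat \<Rightarrow> complex" where
  "gk s k = (s ^ (4 * k + 4) - 1) / s ^ (k + 3)"

lemma ew_repc: "ew (replicate n Gc) = int n" by (simp add: ew_replicate)

lemma Hc: assumes s0: "s \<noteq> 0"
  shows "eqv s (H s (replicate (Suc k) Gc) False True) (smul (gk s k) (mon (Gd # replicate k Gc)))"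
proof (induction k)
  case 0
  have "H s [Gc] False True = smul (gk s 0) (mon [Gd])"
    using s0 by (simp add: H_FT_c H_Nil H_TT[OF s0] pre_zero pre_zero' smul_zero smul_zero'' pre_smul
        mon_cons_pre[symmetric] smul_def fun_eq_iff gk_def field_simps power2_eq_square power3_eq_cube power4_eq_xxxx)
  then show ?case by (simp add: eqv_refl)
next
  case (Suc k)
  let ?m = "mon (Gd # Gc # replicate k Gc)"
  have e: "H s (replicate (Suc (Suc k)) Gc) False True = smul s (pre Gc (H s (replicate (Suc k) Gc) False True))
     + smul (1 / s * (s\<^sup>2 - 1 / s\<^sup>2)) (smul (s powi (- int (Suc k))) ?m)"
    by (simp only: replicate_Suc[of "Suc k"] H_FT_c H_TT[OF s0] ew_repc pre_smul mon_cons_pre[symmetric]) simp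
  have e1: "eqv s (pre Gc (H s (replicate (Suc k) Gc) False True)) (smul (gk s k) (mon (Gc # Gd # replicate k Gc)))"
  proof -
    have x: "fmul (mon [Gc]) (smul (gk s k) (mon (Gd # replicate k Gc))) = smul (gk s k) (mon (Gc # Gd # replicate k Gc))"
      by (simp only: fmul_smul_right mon_mul) simp
    show ?thesis using eqv_lm[OF Suc, of "[Gc]"] unfolding fmul_mon_single pre_smul mon_cons_pre[symmetric] .
  qed
  have e2: "eqv s (mon (Gc # Gd # replicate k Gc)) (smul (s\<^sup>2) ?m)"
    using sw_cd[of s "[]" "replicate k Gc"] by simp
  have E: "eqv s (H s (replicate (Suc (Suc k)) Gc) False True)
     (smul s (smul (gk s k) (smul (s\<^sup>2) ?m)) + smul (1 / s * (s\<^sup>2 - 1 / s\<^sup>2)) (smul (s powi (- int (Suc k))) ?m))"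
    unfolding e by (rule eqv_add[OF eqv_smul[OF eqv_trans[OF e1 eqv_smul[OF e2]]] eqv_refl])
  have c: "s * (gk s k * s\<^sup>2) + 1 / s * (s\<^sup>2 - 1 / s\<^sup>2) * (s powi (- int (Suc k))) = gk s (Suc k)"
    using s0 unfolding gk_def power_int_minus power_int_of_nat
    by (simp add: field_simps power_add power_mult_distrib power2_eq_square power3_eq_cube power4_eq_xxxx) (simp add: eval_nat_numeral)
  have eq: "smul s (smul (gk s k) (smul (s\<^sup>2) ?m)) + smul (1 / s * (s\<^sup>2 - 1 / s\<^sup>2)) (smul (s powi (- int (Suc k))) ?m)
      = smul (gk s (Suc k)) ?m"
    unfolding c[symmetric] by (simp add: smul_def fun_eq_iff algebra_simps)
  show ?case using E unfolding eq by simp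
qed


context ctx begin

lemma H_Qw0: "H s (Qw i j 0) False True = 0"
proof -
  have "H s (Qw i j 0) False True = H s (replicate i Gd @ replicate j Gb @ []) False True" by (simp add: Qw_def)
  also have "\<dots> = 0"
    unfolding Hpre_d Hpre_b H_Nil by (simp add: fmul_zero_right smul_zero)
  finally show ?thesis .
qed

lemma preH_Qw: "pre Ga (H s (Qw i j (Suc k)) False True)
   = smul ((1 / s) ^ i * (1 / s) ^ j) (fmul (mon (Ga # replicate i Gd @ replicate j Gb)) (H s (replicate (Suc k) Gc) False True))"
proof -
  have "H s (Qw i j (Suc k)) False True = H s (replicate i Gd @ replicate j Gb @ replicate (Suc k) Gc) False True"
    by (simp add: Qw_def)
  then show ?thesis
    unfolding Hpre_d Hpre_b by (simp add: fmul_smul_right pre_smul smul_smul pre_fmul fmul_mon_left_assoc)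
qed

lemma H5: "eqv s (mon (Ga # replicate i Gd @ replicate j Gb @ Gd # replicate k Gc))
   (smul ((s\<^sup>2) ^ j) (smul (s\<^sup>2) (smul ((s\<^sup>2) ^ i * ((s\<^sup>2) ^ i * 1 ^ j)) (mon (Qw i (Suc j) (Suc k)))) + mon (Qw i j k)))"
proof -
  let ?R = "replicate j Gb @ replicate k Gc"
  have h1: "eqv s (mon (Ga # replicate i Gd @ replicate j Gb @ Gd # replicate k Gc)) (smul ((s\<^sup>2) ^ j) (mon ([Ga, Gd] @ replicate i Gd @ ?R)))"
    using move1[OF sw_bd, where u="Ga # replicate i Gd" and n=j and v="replicate k Gc"] by (simp add: rep_cons)
  have h2: "eqv s (mon ([Ga, Gd] @ replicate i Gd @ ?R)) (smul (s\<^sup>2) (mon ([Gb, Gc] @ replicate i Gd @ ?R)) + mon (Qw i j k))"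
    using rel_ad[of s "[]" "replicate i Gd @ ?R"] by (simp add: Qw_def)
  have h3: "eqv s (mon ([Gb, Gc] @ replicate i Gd @ ?R)) (smul ((s\<^sup>2) ^ i) (mon ([Gb] @ replicate i Gd @ [Gc] @ ?R)))"
    using move2[OF sw_cd, where u="[Gb]" and n=i and v="?R"] by simp
  have h4: "eqv s (mon ([Gb] @ replicate i Gd @ [Gc] @ ?R)) (smul ((s\<^sup>2) ^ i) (mon ((replicate i Gd @ [Gb]) @ [Gc] @ replicate j Gb @ replicate k Gc)))"
    using move2[OF sw_bd, where u="[]" and n=i and v="[Gc] @ ?R"] by simp
  have h5: "eqv s (mon ((replicate i Gd @ [Gb]) @ [Gc] @ replicate j Gb @ replicate k Gc)) (smul (1 ^ j) (mon (Qw i (Suc j) (Suc k))))"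
    using move2[OF sw_cb, where u="replicate i Gd @ [Gb]" and n=j and v="replicate k Gc"] by (simp add: Qw_def)
  have h345: "eqv s (mon ([Gb, Gc] @ replicate i Gd @ ?R)) (smul ((s\<^sup>2) ^ i * ((s\<^sup>2) ^ i * 1 ^ j)) (mon (Qw i (Suc j) (Suc k))))"
    by (rule eqv_chain[OF h3 eqv_chain[OF h4 h5]])
  have h2': "eqv s (mon ([Ga, Gd] @ replicate i Gd @ ?R)) (smul (s\<^sup>2) (smul ((s\<^sup>2) ^ i * ((s\<^sup>2) ^ i * 1 ^ j)) (mon (Qw i (Suc j) (Suc k)))) + mon (Qw i j k))"
    by (rule eqv_trans[OF h2 eqv_add[OF eqv_smul[OF h345] eqv_refl]])
  show ?thesis by (rule eqv_chain2[OF h1 h2'])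
qed

end


context ctx begin

lemma famB_common:
  "eqv s (mon (Qw i j k @ [Gb])) (mon (Qw i (Suc j) k))"
  "eqv s (mon (Gb # Qw i j k)) (smul ((s\<^sup>2) ^ i) (mon (Qw i (Suc j) k)))"
  "s powi (- ew (Qw i j k)) = s ^ i * s ^ j / s ^ k"
proof -
  have "eqv s (mon (Qw i j k @ [Gb])) (smul (1 ^ k) (mon (Qw i (Suc j) k)))"
    using move1[OF sw_cb, where u="replicate i Gd @ replicate j Gb" and n=k and v="[]"]
    by (simp add: Qw_def rep_cons replicate_append_same)
  then show "eqv s (mon (Qw i j k @ [Gb])) (mon (Qw i (Suc j) k))" by (simp add: smul_one)
  show "eqv s (mon (Gb # Qw i j k)) (smul ((s\<^sup>2) ^ i) (mon (Qw i (Suc j) k)))"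
    using move2[OF sw_bd, where u="[]" and n=i and v="replicate j Gb @ replicate k Gc"] by (simp add: Qw_def)
  show "s powi (- ew (Qw i j k)) = s ^ i * s ^ j / s ^ k"
    unfolding ew_Qw by (rule powi_conv2[OF s0])
qed

lemma famB0: "mon (Qw i (Suc j) 0) \<in> UU s \<sigma>"
proof -
  let ?w = "Qw i j 0" and ?Y = "mon (Qw i (Suc j) 0)"
  have R: "mon (?w @ [Gb]) - smul (s ^ 3) (pre Ga (H s ?w False True) + smul (s powi (- ew ?w)) (mon (Gb # ?w))) \<in> UU s \<sigma>"
    using relU[of ?w Gb] unfolding Tg_b[OF s0] .
  have E0: "eqv s (mon (?w @ [Gb]) - smul (s ^ 3) (pre Ga (H s ?w False True) + smul (s powi (- ew ?w)) (mon (Gb # ?w))))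
     (?Y - smul (s ^ 3) (pre Ga 0 + smul (s ^ i * s ^ j / s ^ 0) (smul ((s\<^sup>2) ^ i) ?Y)))"
    unfolding H_Qw0 famB_common(3)
    by (rule eqv_diff[OF famB_common(1) eqv_smul[OF eqv_add[OF eqv_refl eqv_smul[OF famB_common(2)]]]])
  have c: "1 - s ^ 3 * (s ^ i * s ^ j / s ^ 0 * (s\<^sup>2) ^ i) = 1 - s ^ (3 + 3 * i + j)"
    apply (simp add: field_simps)
    apply (simp add: power_add[symmetric] mult.assoc[symmetric] power_mult_distrib[symmetric] power_mult[symmetric])
    apply (simp add: algebra_simps)
    done
  have eq: "?Y - smul (s ^ 3) (pre Ga 0 + smul (s ^ i * s ^ j / s ^ 0) (smul ((s\<^sup>2) ^ i) ?Y))
     = smul (1 - s ^ (3 + 3 * i + j)) ?Y"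
    unfolding c[symmetric] pre_zero by (simp add: smul_def fun_eq_iff algebra_simps)
  have C: "1 - s ^ (3 + 3 * i + j) \<noteq> 0" using pw_ne1[of "3 + 3 * i + j"] by simp
  show ?thesis by (rule UU_solve[OF R E0[unfolded eq] C])
qed

lemma famBS: assumes X: "mon (Qw i j k) \<in> UU s \<sigma>" shows "mon (Qw i (Suc j) (Suc k)) \<in> UU s \<sigma>"
proof -
  let ?w = "Qw i j (Suc k)" and ?Y = "mon (Qw i (Suc j) (Suc k))" and ?X = "mon (Qw i j k)"
  let ?c = "(1 / s) ^ i * (1 / s) ^ j" and ?g = "gk s k" and ?Z = "(s\<^sup>2) ^ i * ((s\<^sup>2) ^ i * 1 ^ j)"
  let ?u = "Ga # replicate i Gd @ replicate j Gb"
  have R: "mon (?w @ [Gb]) - smul (s ^ 3) (pre Ga (H s ?w False True) + smul (s powi (- ew ?w)) (mon (Gb # ?w))) \<in> UU s \<sigma>"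
    using relU[of ?w Gb] unfolding Tg_b[OF s0] .
  have l1: "eqv s (fmul (mon ?u) (H s (replicate (Suc k) Gc) False True)) (smul ?g (mon (Ga # replicate i Gd @ replicate j Gb @ Gd # replicate k Gc)))"
  proof -
    have x: "fmul (mon ?u) (smul ?g (mon (Gd # replicate k Gc))) = smul ?g (mon (Ga # replicate i Gd @ replicate j Gb @ Gd # replicate k Gc))"
      by (simp add: fmul_smul_right mon_mul)
    show ?thesis using eqv_lm[OF Hc[OF s0], of ?u k] unfolding x .
  qed
  have ePre: "eqv s (pre Ga (H s ?w False True)) (smul ?c (smul ?g (smul ((s\<^sup>2) ^ j) (smul (s\<^sup>2) (smul ?Z ?Y) + ?X))))"
    unfolding preH_Qw by (rule eqv_smul[OF eqv_trans[OF l1 eqv_smul[OF H5]]])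
  have E0: "eqv s (mon (?w @ [Gb]) - smul (s ^ 3) (pre Ga (H s ?w False True) + smul (s powi (- ew ?w)) (mon (Gb # ?w))))
     (?Y - smul (s ^ 3) (smul ?c (smul ?g (smul ((s\<^sup>2) ^ j) (smul (s\<^sup>2) (smul ?Z ?Y) + ?X)))
        + smul (s ^ i * s ^ j / s ^ Suc k) (smul ((s\<^sup>2) ^ i) ?Y)))"
    unfolding famB_common(3)
    by (rule eqv_diff[OF famB_common(1) eqv_smul[OF eqv_add[OF ePre eqv_smul[OF famB_common(2)]]]])
  have eq: "?Y - smul (s ^ 3) (smul ?c (smul ?g (smul ((s\<^sup>2) ^ j) (smul (s\<^sup>2) (smul ?Z ?Y) + ?X)))
        + smul (s ^ i * s ^ j / s ^ Suc k) (smul ((s\<^sup>2) ^ i) ?Y))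
     = smul (1 - s ^ 3 * (?c * (?g * ((s\<^sup>2) ^ j * (s\<^sup>2 * ?Z))) + s ^ i * s ^ j / s ^ Suc k * (s\<^sup>2) ^ i)) ?Y
       + smul (- (s ^ 3 * (?c * (?g * (s\<^sup>2) ^ j)))) ?X"
    by (simp add: smul_def fun_eq_iff algebra_simps)
  have c: "1 - s ^ 3 * (?c * (?g * ((s\<^sup>2) ^ j * (s\<^sup>2 * ?Z))) + s ^ i * s ^ j / s ^ Suc k * (s\<^sup>2) ^ i)
      = 1 - s ^ (6 + 3 * i + j + 3 * k)"
    using s0 unfolding gk_def
    apply (simp add: field_simps)
    apply (simp add: power_add[symmetric] mult.assoc[symmetric] power_mult_distrib[symmetric] power_mult[symmetric])
    apply (simp add: algebra_simps)
    apply (simp only: power_Suc[symmetric])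
    apply (rule arg_cong[where f="(^) s"])
    apply simp
    done
  have C: "1 - s ^ (6 + 3 * i + j + 3 * k) \<noteq> 0" using pw_ne1[of "6 + 3 * i + j + 3 * k"] by simp
  show ?thesis by (rule UU_solve2[OF R X E0[unfolded eq c] C])
qed

end


context ctx begin

lemma allQ: "mon (Qw i j k) \<in> UU s \<sigma>"
proof (induction k arbitrary: j)
  case 0
  show ?case
  proof (cases j)
    case 0
    show ?thesis
    proof (cases i)
      case 0 then show ?thesis using famOne \<open>j = 0\<close> by simp
    next
      case (Suc i') then show ?thesis using famD[of i'] \<open>j = 0\<close> by simp
    qed
  next
    case (Suc j') then show ?thesis using famB0[of i j'] by simp
  qed
next
  case (Suc k)
  show ?case
  proof (cases j)
    case 0 then show ?thesis using famC[of i k] by simp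
  next
    case (Suc j') then show ?thesis using famBS[OF Suc.IH[of j']] by simp
  qed
qed

lemma allP: "mon (Pw i j k) \<in> UU s \<sigma>"
proof (cases i)
  case 0
  then have "Pw i j k = Qw 0 j k" by (simp add: Pw_def Qw_def)
  then show ?thesis using allQ by simp
next
  case (Suc i') then show ?thesis using famA[of i'] by simp
qed

lemma allFA: "h \<in> FA \<Longrightarrow> h \<in> UU s \<sigma>"
proof -
  assume h: "h \<in> FA"
  have fin: "finite {w. h w \<noteq> 0}" using h by (simp add: FA_def fin_def)
  have "(\<Sum>w\<in>{w. h w \<noteq> 0}. smul (h w) (mon w)) \<in> UU s \<sigma>"
  proof (rule UU_sum[OF fin])
    fix w
    have "mon w \<in> UU s \<sigma>" by (rule SP_UU[OF allP allQ mon_SP[OF s0]])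
    then show "smul (h w) (mon w) \<in> UU s \<sigma>" by (rule UU_smul)
  qed
  then show ?thesis using FA_decomp[OF h] by simp
qed

end

theorem mainTheorem11:
  fixes s :: complex and \<sigma> :: "fa \<Rightarrow> fa"
  assumes "s \<noteq> 0"
    and "\<forall>n::nat. n > 0 \<longrightarrow> (s\<^sup>2) ^ n \<noteq> 1"
    and "is_ribbon_plus s \<sigma>"
  shows "\<forall>h\<in>FA. \<exists>(n::nat) fs gs. (\<forall>i<n. fs i \<in> FA \<and> gs i \<in> FA)
           \<and> h - (\<Sum>i<n. b1 s \<sigma> (fs i) (gs i)) \<in> Iq s"
proof
  fix h assume h: "h \<in> FA"
  have sig: "\<forall>x. \<sigma> (mon [x]) - smul (s ^ 3) (mon [x]) \<in> Iq s"
    using assms(3) unfolding is_ribbon_plus_def by blast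
  interpret ctx s \<sigma>
    by unfold_locales (use assms(1,2) sig in auto)
  have "h \<in> UU s \<sigma>" by (rule allFA[OF h])
  then show "\<exists>(n::nat) fs gs. (\<forall>i<n. fs i \<in> FA \<and> gs i \<in> FA)
           \<and> h - (\<Sum>i<n. b1 s \<sigma> (fs i) (gs i)) \<in> Iq s"
    unfolding UU_def by (rule CollectD)
qed


end
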